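(* Let $\mu$ be a classification problem, let $f^*$ be its Bayes regressor and $r^*_a:=f^*\sharp(\mu^X_a\times\{a\})$ for $a\in[m]$. Then the minimum of $\sum_{a\in[m]}\mathrm{Err}_a(h)$ over all randomized classifiers $h:\mathcal X\times\mathcal A\to\mathcal Y$ satisfying demographic parity exists and $$\min_{h:\ \text{DP holds}}\ \sum_{a\in[m]}\mathrm{Err}_a(h)=\frac12\min_{q\in\mathcal Q_k}\sum_{a\in[m]}W_1(r^*_a,q)=\frac12\min_{q\in\mathcal Q_k}\sum_{a\in[m]}\ \min_{\gamma_a\in\Gamma(r^*_a,q)}\int_{\Delta_k\times\mathcal Y}\|s-y\|_1\,d\gamma_a(s,y).$$
   Context: Setup. $\mathcal X$ is a standard Borel space, $k\ge 2$, $\mathcal Y=\{e_1,\dots,e_k\}\subset\mathbb R^k$ is the set of standard basis vectors (one-hot labels), and $\mathcal A=[m]=\{1,\dots,m\}$. A classification problem is a probability distribution $\mu$ of a triple $(X,Y,A)$ on $\mathcal X\times\mathcal Y\times\mathcal A$ with $\mathbb P(A=a)>0$ for every $a$; $\mu_a$ is $\mu$ conditioned on $A=a$ and $\mu^X_a$ is the law of $X$ under $\mu_a$. A randomized function $f:\mathcal U\to\mathcal V$ is given by a Markov kernel $K$ with $\mathbb P(f(u)\in B)=K(u,B)$; its internal randomness is independent of $(X,Y,A)$. The push-forward of a measure $p$ is $f\sharp p(B)=\int K(u,B)\,dp(u)$. A (randomized) classifier is a randomized function $h:\mathcal X\times\mathcal A\to\mathcal Y$, and $\mathrm{Err}_a(h):=\mathbb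 P(h(X,a)\neq Y\mid A=a)$, the probability being over $\mu$ and the randomness of $h$. $h$ satisfies demographic parity (DP) if $\mathbb P(h(X,a)=y\mid A=a)=\mathbb P(h(X,a')=y\mid A=a')$ for all $y\in\mathcal Y$, $a,a'\in\mathcal A$. $\Delta_k=\{x\in\mathbb R^k:x\ge0,\ \sum_i x_i=1\}$. The Bayes regressor is $f^*(x,a)=\mathbb E_\mu[Y\mid X=x,A=a]\in\Delta_k$ (the vector of conditional class probabilities), and $f^*\sharp(\mu^X_a\times\{a\})$ is the law of $f^*(X,a)$ for $X\sim\mu^X_a$. $\mathcal Q_k$ is the set of probability distributions supported on $\mathcal Y$. $\Gamma(p,q)$ is the set of couplings of $p$ and $q$, and $W_1(p,q)=\inf_{\gamma\in\Gamma(p,q)}\int\|s-s'\|_1\,d\gamma(s,s')$ is the Wasserstein-1 distance w.r.t. the $\ell_1$ metric on $\mathbb R^k$. *)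

theory Defs
  imports "HOL-Probability.Probability"
begin

definition labels :: "(real^'k) set" where
  "labels = range (\<lambda>i::'k. axis i 1)"

definition l1dist :: "(real^'k) \<Rightarrow> (real^'k) \<Rightarrow> real" where
  "l1dist s t = (\<Sum>i\<in>UNIV. \<bar>s $ i - t $ i\<bar>)"

definition triple_space :: "nat \<Rightarrow> ('x::topological_space \<times> (real^'k) \<times> nat) measure" where
  "triple_space m = borel \<Otimes>\<^sub>M count_space labels \<Otimes>\<^sub>M count_space {1..m}"

definition classification_problem ::
  "nat \<Rightarrow> ('x::topological_space \<times> (real^'k) \<times> nat) measure \<Rightarrow> bool" where
  "classification_problem m \<mu> \<longleftrightarrow>
     sets \<mu> = sets (triple_space m) \<and> prob_space \<mu> \<and>
     (\<forall>a\<in>{1..m}. measure \<mu> {\<omega>\<in>space \<mu>. snd (snd \<omega>) = a} > 0)"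

definition cond_measure ::
  "('x \<times> (real^'k) \<times> nat) measure \<Rightarrow> nat \<Rightarrow> ('x \<times> (real^'k) \<times> nat) measure" where
  "cond_measure \<mu> a = density \<mu>
     (\<lambda>\<omega>. ennreal (indicator {\<omega>. snd (snd \<omega>) = a} \<omega> / measure \<mu> {\<omega>\<in>space \<mu>. snd (snd \<omega>) = a}))"

definition X_law :: "('x::topological_space \<times> (real^'k) \<times> nat) measure \<Rightarrow> nat \<Rightarrow> 'x measure" where
  "X_law \<mu> a = distr (cond_measure \<mu> a) borel fst"

text \<open>A randomized classifier h : X x A -> Y, i.e. a Markov kernel into the finite set
  of labels, given by its point probabilities: h x a y = P(h(x,a) = y).\<close>
definition randomized_classifier :: "nat \<Rightarrow> ('x::topological_space \<Rightarrow> nat \<Rightarrow> (real^'k) \<Rightarrow> real) \<Rightarrow> bool" where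
  "randomized_classifier m h \<longleftrightarrow>
     (\<forall>a\<in>{1..m}. \<forall>y\<in>labels. (\<lambda>x. h x a y) \<in> borel_measurable borel) \<and>
     (\<forall>x. \<forall>a\<in>{1..m}. \<forall>y\<in>labels. h x a y \<ge> 0) \<and>
     (\<forall>x. \<forall>a\<in>{1..m}. (\<Sum>y\<in>labels. h x a y) = 1)"

text \<open>Err_a(h) = P(h(X,a) \<noteq> Y | A = a), with the internal randomness of h independent of (X,Y,A).\<close>
definition Err :: "('x \<times> (real^'k) \<times> nat) measure \<Rightarrow> ('x \<Rightarrow> nat \<Rightarrow> (real^'k) \<Rightarrow> real) \<Rightarrow> nat \<Rightarrow> real" where
  "Err \<mu> h a = integral\<^sup>L (cond_measure \<mu> a) (\<lambda>(x, y, _). \<Sum>y'\<in>labels - {y}. h x a y')"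

definition pred_prob :: "('x \<times> (real^'k) \<times> nat) measure \<Rightarrow> ('x \<Rightarrow> nat \<Rightarrow> (real^'k) \<Rightarrow> real) \<Rightarrow> nat \<Rightarrow> (real^'k) \<Rightarrow> real" where
  "pred_prob \<mu> h a y = integral\<^sup>L (cond_measure \<mu> a) (\<lambda>(x, _, _). h x a y)"

definition demographic_parity :: "nat \<Rightarrow> ('x \<times> (real^'k) \<times> nat) measure \<Rightarrow> ('x \<Rightarrow> nat \<Rightarrow> (real^'k) \<Rightarrow> real) \<Rightarrow> bool" where
  "demographic_parity m \<mu> h \<longleftrightarrow>
     (\<forall>y\<in>labels. \<forall>a\<in>{1..m}. \<forall>a'\<in>{1..m}. pred_prob \<mu> h a y = pred_prob \<mu> h a' y)"

definition bayes_regressor :: "nat \<Rightarrow> ('x::topological_space \<times> (real^'k) \<times> nat) measure \<Rightarrow> ('x \<Rightarrow> nat \<Rightarrow> (real^'k)) \<Rightarrow> bool" where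
  "bayes_regressor m \<mu> f \<longleftrightarrow>
     (\<lambda>(x, a). f x a) \<in> borel_measurable (borel \<Otimes>\<^sub>M count_space {1..m}) \<and>
     integrable \<mu> (\<lambda>(x, y, a). f x a) \<and>
     (\<forall>C\<in>sets (borel \<Otimes>\<^sub>M count_space {1..m}).
        integral\<^sup>L \<mu> (\<lambda>(x, y, a). indicator C (x, a) *\<^sub>R y) =
        integral\<^sup>L \<mu> (\<lambda>(x, y, a). indicator C (x, a) *\<^sub>R f x a))"

definition Qk :: "(real^'k) measure set" where
  "Qk = {q. sets q = sets (borel :: (real^'k) measure) \<and> prob_space q \<and> measure q labels = 1}"

definition couplings :: "(real^'k) measure \<Rightarrow> (real^'k) measure \<Rightarrow> ((real^'k) \<times> (real^'k)) measure set" where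
  "couplings p q = {\<gamma>. sets \<gamma> = sets (borel :: ((real^'k) \<times> (real^'k)) measure) \<and> prob_space \<gamma> \<and>
                        distr \<gamma> borel fst = p \<and> distr \<gamma> borel snd = q}"

definition transport_cost :: "((real^'k) \<times> (real^'k)) measure \<Rightarrow> real" where
  "transport_cost \<gamma> = integral\<^sup>L \<gamma> (\<lambda>(s, t). l1dist s t)"

definition W1 :: "(real^'k) measure \<Rightarrow> (real^'k) measure \<Rightarrow> real" where
  "W1 p q = (INF \<gamma>\<in>couplings p q. transport_cost \<gamma>)"

definition is_min :: "real set \<Rightarrow> real \<Rightarrow> bool" where
  "is_min S v \<longleftrightarrow> v \<in> S \<and> (\<forall>s\<in>S. v \<le> s)"

end

theory Submission
  imports Defs
begin


definition sx :: "(real^'k) set" where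
  "sx = {x. (\<forall>i. 0 \<le> x$i) \<and> (\<Sum>i\<in>UNIV. x$i) = 1}"

definition mx :: "real^'k \<Rightarrow> real^'k \<Rightarrow> real" where
  "mx \<psi> s = Max (range (\<lambda>j. s$j - \<psi>$j))"

lemma sx_le1: "s \<in> sx \<Longrightarrow> s$i \<le> 1"
proof -
  assume "s \<in> sx"
  then have "\<forall>i. 0 \<le> s$i" "(\<Sum>i\<in>UNIV. s$i) = 1" by (auto simp: sx_def)
  then show ?thesis using member_le_sum[of i UNIV "\<lambda>i. s$i"] by auto
qed

lemma sx_abs: "s \<in> sx \<Longrightarrow> \<bar>s$i\<bar> \<le> 1"
  using sx_le1[of s i] by (auto simp: sx_def)

lemma vec_nth_meas[measurable (raw)]:
  "f \<in> borel_measurable M \<Longrightarrow> (\<lambda>x. f x $ i :: real) \<in> borel_measurable M"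
  using measurable_compose[OF _ borel_measurable_continuous_onI[OF linear_continuous_on[OF bounded_linear_vec_nth]]]
  by blast

lemma Max_diff_bound:
  fixes a b :: "'k::finite \<Rightarrow> real"
  assumes "\<And>j. \<bar>a j - b j\<bar> \<le> c"
  shows "\<bar>Max (range a) - Max (range b)\<bar> \<le> c"
proof -
  obtain j where j: "a j = Max (range a)" using Max_in[of "range a"] by fastforce
  obtain l where l: "b l = Max (range b)" using Max_in[of "range b"] by fastforce
  have m: "b j \<le> Max (range b)" "a l \<le> Max (range a)" by auto
  have h: "a j - b j \<le> c" "b l - a l \<le> c" using assms[of j] assms[of l] by (auto simp: abs_le_iff)
  show ?thesis unfolding abs_le_iff using m h j l by linarith
qed

lemma mx_lip: "\<bar>mx \<psi> s - mx \<psi>' s\<bar> \<le> (\<Sum>i\<in>UNIV. \<bar>\<psi>$i - \<psi>'$i\<bar>)"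
  unfolding mx_def
proof (rule Max_diff_bound)
  fix j
  have "\<bar>\<psi>$j - \<psi>'$j\<bar> \<le> (\<Sum>i\<in>UNIV. \<bar>\<psi>$i - \<psi>'$i\<bar>)" by (rule member_le_sum) auto
  then show "\<bar>s $ j - \<psi> $ j - (s $ j - \<psi>' $ j)\<bar> \<le> (\<Sum>i\<in>UNIV. \<bar>\<psi>$i - \<psi>'$i\<bar>)" by (simp add: abs_minus_commute)
qed

lemma mx_bound: "s \<in> sx \<Longrightarrow> \<bar>mx \<psi> s\<bar> \<le> 1 + (\<Sum>i\<in>UNIV. \<bar>\<psi>$i\<bar>)"
proof -
  assume s: "s \<in> sx"
  have "\<bar>mx \<psi> s - mx 0 s\<bar> \<le> (\<Sum>i\<in>UNIV. \<bar>\<psi>$i\<bar>)" using mx_lip[of \<psi> s 0] by simp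
  moreover have "\<bar>mx 0 s\<bar> \<le> 1"
  proof -
    obtain j where j: "mx 0 s = s$j" unfolding mx_def using Max_in[of "range (\<lambda>j. s$j - 0$j)"] by fastforce
    then show ?thesis using s sx_le1[OF s, of j] by (auto simp: sx_def)
  qed
  ultimately show ?thesis by linarith
qed

lemma max_perturb:
  fixes a d :: "'k::finite \<Rightarrow> real"
  shows "\<exists>\<epsilon>>0. \<forall>t. 0 < t \<and> t < \<epsilon> \<longrightarrow>
     Max (range (\<lambda>j. a j - t * d j)) = Max (range a) - t * Min (d ` {i. a i = Max (range a)})"
proof -
  define M where "M = Max (range a)"
  define T where "T = {i. a i = M}"
  define B where "B = (\<Sum>i\<in>UNIV. \<bar>d i\<bar>) + 1"
  have B: "\<bar>d i\<bar> < B" for i using member_le_sum[of i UNIV "\<lambda>i. \<bar>d i\<bar>"] by (auto simp: B_def)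
  have Tne: "T \<noteq> {}" unfolding T_def M_def using Max_in[of "range a"] by fastforce
  have aleM: "a i \<le> M" for i by (auto simp: M_def)
  obtain \<delta> where \<delta>: "\<delta> > 0" "\<And>j. j \<notin> T \<Longrightarrow> a j \<le> M - \<delta>"
  proof (cases "UNIV - T = {}")
    case True then show ?thesis using that[of 1] by auto
  next
    case False
    define \<delta> where "\<delta> = M - Max (a ` (UNIV - T))"
    have "Max (a ` (UNIV - T)) \<in> a ` (UNIV - T)" using False by (intro Max_in) auto
    then have "\<delta> > 0" using aleM by (auto simp: \<delta>_def T_def less_le)
    moreover have "a j \<le> M - \<delta>" if "j \<notin> T" for j using that by (auto simp: \<delta>_def)
    ultimately show ?thesis using that by blast
  qed
  define \<epsilon> where "\<epsilon> = \<delta> / (2 * B)"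
  have Bpos: "B > 0" using B[of undefined] by linarith
  have "\<epsilon> > 0" using \<delta> Bpos by (auto simp: \<epsilon>_def)
  moreover have "Max (range (\<lambda>j. a j - t * d j)) = M - t * Min (d ` T)" if t: "0 < t" "t < \<epsilon>" for t
  proof -
    have tB: "t * B < \<delta> / 2" using t Bpos by (auto simp: \<epsilon>_def field_simps)
    obtain i0 where i0: "i0 \<in> T" "d i0 = Min (d ` T)" using Min_in[of "d ` T"] Tne by fastforce
    have tdB: "\<bar>t * d j\<bar> \<le> t * B" for j using B[of j] t by (auto simp: abs_mult intro: mult_left_mono)
    show ?thesis
    proof (rule Max_eqI)
      show "M - t * Min (d ` T) \<in> range (\<lambda>j. a j - t * d j)"
        using i0 by (auto simp: T_def intro!: image_eqI[of _ _ i0])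
      fix y assume "y \<in> range (\<lambda>j. a j - t * d j)"
      then obtain j where y: "y = a j - t * d j" by auto
      show "y \<le> M - t * Min (d ` T)"
      proof (cases "j \<in> T")
        case True
        then have "Min (d ` T) \<le> d j" by auto
        then have "t * Min (d ` T) \<le> t * d j" using t by (auto intro: mult_left_mono)
        then show ?thesis using True y by (auto simp: T_def)
      next
        case False
        have "a j \<le> M - \<delta>" using \<delta>(2)[OF False] .
        moreover have "- t * d j \<le> t * B" using tdB[of j] by linarith
        moreover have "t * Min (d ` T) \<le> t * B" using tdB[of i0] abs_ge_self[of "t * d i0"] i0(2) by (metis order_trans)
        ultimately show ?thesis using y tB by linarith
      qed
    qed simp
  qed
  ultimately show ?thesis unfolding M_def T_def by blast
qed


definition Dual :: "'x measure \<Rightarrow> ('x \<Rightarrow> real^'k) \<Rightarrow> real^'k \<Rightarrow> real^'k \<Rightarrow> real" where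
  "Dual P s q \<psi> = inner q \<psi> + (\<integral>x. mx \<psi> (s x) \<partial>P)"

definition box01 :: "(real^'k) set" where "box01 = cbox 0 1"

lemma box01_iff: "\<psi> \<in> box01 \<longleftrightarrow> (\<forall>i. 0 \<le> \<psi>$i \<and> \<psi>$i \<le> 1)"
  by (simp add: box01_def mem_box_cart)

lemma sum_abs_le_norm: "(\<Sum>i\<in>UNIV. \<bar>v$i\<bar>) \<le> real CARD('k) * norm (v::real^'k)"
proof -
  have "(\<Sum>i\<in>UNIV. \<bar>v$i\<bar>) \<le> (\<Sum>i\<in>(UNIV::'k set). norm v)"
    by (intro sum_mono) (simp add: component_le_norm_cart)
  then show ?thesis by simp
qed

locale semi = prob_space P for P :: "'x measure" +
  fixes s :: "'x \<Rightarrow> real^'k"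
  assumes s_meas[measurable]: "s \<in> borel_measurable P"
    and s_ae: "AE x in P. s x \<in> sx"
begin

lemma comp_meas[measurable]: "(\<lambda>x. s x $ i) \<in> borel_measurable P"
  by measurable

lemma mx_meas[measurable]: "(\<lambda>x. mx \<psi> (s x)) \<in> borel_measurable P"
  unfolding mx_def by measurable

lemma int_mx: "integrable P (\<lambda>x. mx \<psi> (s x))"
  by (rule integrable_const_bound[where B="1 + (\<Sum>i\<in>UNIV. \<bar>\<psi>$i\<bar>)"])
     (use s_ae mx_bound in \<open>auto elim!: AE_mp\<close>)

lemma int_comp: "integrable P (\<lambda>x. s x $ i)"
  by (rule integrable_const_bound[where B=1])
     (use s_ae sx_abs in \<open>auto elim!: AE_mp\<close>)

lemma integral_bound_const:
  fixes g :: "'x \<Rightarrow> real"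
  assumes "integrable P g" "\<And>x. \<bar>g x\<bar> \<le> B"
  shows "\<bar>integral\<^sup>L P g\<bar> \<le> B"
proof -
  have "integral\<^sup>L P g \<le> integral\<^sup>L P (\<lambda>_. B)" by (intro Bochner_Integration.integral_mono) (use assms in \<open>auto simp: abs_le_iff\<close>)
  moreover have "integral\<^sup>L P (\<lambda>_. - B) \<le> integral\<^sup>L P g"
  proof (intro Bochner_Integration.integral_mono)
    fix x show "- B \<le> g x" using assms(2)[of x] by (simp add: abs_le_iff)
  qed (use assms in auto)
  ultimately show ?thesis by (simp add: prob_space abs_le_iff)
qed

lemma Dual_lip:
  assumes q: "q \<in> sx"
  shows "\<bar>Dual P s q \<psi> - Dual P s q \<psi>'\<bar> \<le> 2 * (\<Sum>i\<in>UNIV. \<bar>\<psi>$i - \<psi>'$i\<bar>)"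
proof -
  have "\<bar>inner q \<psi> - inner q \<psi>'\<bar> = \<bar>\<Sum>i\<in>UNIV. q$i * (\<psi>$i - \<psi>'$i)\<bar>"
    by (simp add: inner_vec_def sum_subtractf right_diff_distrib)
  also have "\<dots> \<le> (\<Sum>i\<in>UNIV. \<bar>q$i * (\<psi>$i - \<psi>'$i)\<bar>)" by (rule sum_abs)
  also have "\<dots> \<le> (\<Sum>i\<in>UNIV. \<bar>\<psi>$i - \<psi>'$i\<bar>)"
  proof (intro sum_mono)
    fix i
    have "0 \<le> q$i" "q$i \<le> 1" using q sx_le1[OF q] by (auto simp: sx_def)
    then show "\<bar>q$i * (\<psi>$i - \<psi>'$i)\<bar> \<le> \<bar>\<psi>$i - \<psi>'$i\<bar>"
      by (simp add: abs_mult mult_left_le_one_le)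
  qed
  finally have 1: "\<bar>inner q \<psi> - inner q \<psi>'\<bar> \<le> (\<Sum>i\<in>UNIV. \<bar>\<psi>$i - \<psi>'$i\<bar>)" .
  have "\<bar>(\<integral>x. mx \<psi> (s x) \<partial>P) - (\<integral>x. mx \<psi>' (s x) \<partial>P)\<bar> = \<bar>\<integral>x. mx \<psi> (s x) - mx \<psi>' (s x) \<partial>P\<bar>"
    using int_mx by simp
  also have "\<dots> \<le> (\<Sum>i\<in>UNIV. \<bar>\<psi>$i - \<psi>'$i\<bar>)"
    by (rule integral_bound_const) (use int_mx mx_lip in auto)
  finally show ?thesis using 1 unfolding Dual_def by linarith
qed

lemma Dual_cont: "q \<in> sx \<Longrightarrow> continuous_on S (Dual P s q)"
proof -
  assume q: "q \<in> sx"
  define C where "C = 2 * real CARD('k) + 1"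
  have C: "C > 0" by (simp add: C_def add_pos_nonneg)
  have lip: "dist (Dual P s q \<psi>') (Dual P s q \<psi>) \<le> C * dist \<psi>' \<psi>" for \<psi> \<psi>'
  proof -
    have "dist (Dual P s q \<psi>') (Dual P s q \<psi>) \<le> 2 * (\<Sum>i\<in>UNIV. \<bar>(\<psi>'-\<psi>)$i\<bar>)"
      using Dual_lip[OF q, of \<psi>' \<psi>] by (simp add: dist_real_def)
    also have "\<dots> \<le> 2 * (real CARD('k) * norm (\<psi>' - \<psi>))" using sum_abs_le_norm[of "\<psi>'-\<psi>"] by simp
    also have "\<dots> \<le> C * dist \<psi>' \<psi>" by (simp add: C_def dist_norm algebra_simps)
    finally show ?thesis .
  qed
  show ?thesis
  unfolding continuous_on_iff
  proof (intro ballI allI impI)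
    fix \<psi> e assume "(e::real) > 0"
    show "\<exists>d>0. \<forall>\<psi>'\<in>S. dist \<psi>' \<psi> < d \<longrightarrow> dist (Dual P s q \<psi>') (Dual P s q \<psi>) < e"
    proof (intro exI[of _ "e / C"] conjI ballI impI)
      show "e / C > 0" using \<open>e > 0\<close> C by simp
      fix \<psi>' assume "dist \<psi>' \<psi> < e / C"
      then have "C * dist \<psi>' \<psi> < e" using C by (simp add: field_simps)
      then show "dist (Dual P s q \<psi>') (Dual P s q \<psi>) < e" using lip[of \<psi>' \<psi>] by linarith
    qed
  qed
qed

lemma Dual_box:
  assumes q: "q \<in> sx"
  shows "\<exists>\<psi>'\<in>box01. Dual P s q \<psi>' \<le> Dual P s q \<psi>"
proof -
  define c where "c = Min (range (\<lambda>i. \<psi>$i))"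
  define \<psi>' :: "real^'k" where "\<psi>' = (\<chi> i. min 1 (\<psi>$i - c))"
  obtain j0 where j0: "\<psi>$j0 = c" unfolding c_def using Min_in[of "range (\<lambda>i. \<psi>$i)"] by fastforce
  have cle: "c \<le> \<psi>$i" for i by (auto simp: c_def)
  have box: "\<psi>' \<in> box01" using cle by (auto simp: box01_iff \<psi>'_def)
  have shift: "mx \<psi>' t = mx \<psi> t + c" if t: "t \<in> sx" for t
  proof -
    have t0: "0 \<le> t$i" for i using t by (auto simp: sx_def)
    obtain j1 where j1: "mx \<psi> t = t$j1 - \<psi>$j1" unfolding mx_def using Max_in[of "range (\<lambda>j. t$j - \<psi>$j)"] by fastforce
    obtain j2 where j2: "mx \<psi>' t = t$j2 - \<psi>'$j2" unfolding mx_def using Max_in[of "range (\<lambda>j. t$j - \<psi>'$j)"] by fastforce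
    have gea: "t$j - \<psi>$j \<le> mx \<psi> t" for j unfolding mx_def by auto
    have geb: "t$j - \<psi>'$j \<le> mx \<psi>' t" for j unfolding mx_def by auto
    have b0: "\<psi>'$j0 = 0" using j0 by (simp add: \<psi>'_def)
    have "mx \<psi> t + c \<le> mx \<psi>' t"
    proof (cases "\<psi>$j1 - c \<le> 1")
      case True then have "\<psi>'$j1 = \<psi>$j1 - c" by (simp add: \<psi>'_def)
      then show ?thesis using j1 geb[of j1] by linarith
    next
      case False then have "\<psi>'$j1 = 1" by (simp add: \<psi>'_def)
      then show ?thesis using j1 geb[of j1] False t0[of j0] geb[of j0] b0 sx_le1[OF t, of j1] by linarith
    qed
    moreover have "mx \<psi>' t \<le> mx \<psi> t + c"
    proof (cases "\<psi>$j2 - c \<le> 1")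
      case True then have "\<psi>'$j2 = \<psi>$j2 - c" by (simp add: \<psi>'_def)
      then show ?thesis using j2 gea[of j2] by linarith
    next
      case False then have "\<psi>'$j2 = 1" by (simp add: \<psi>'_def)
      then show ?thesis using j2 gea[of j0] j0 t0[of j2] t0[of j0] sx_le1[OF t, of j2] by linarith
    qed
    ultimately show ?thesis by linarith
  qed
  have "(\<integral>x. mx \<psi>' (s x) \<partial>P) = (\<integral>x. mx \<psi> (s x) + c \<partial>P)"
    proof (rule integral_cong_AE)
    show "AE x in P. mx \<psi>' (s x) = mx \<psi> (s x) + c" using s_ae by eventually_elim (rule shift)
  qed auto
  also have "\<dots> = (\<integral>x. mx \<psi> (s x) \<partial>P) + c" using int_mx by (simp add: prob_space)
  finally have I: "(\<integral>x. mx \<psi>' (s x) \<partial>P) = (\<integral>x. mx \<psi> (s x) \<partial>P) + c" .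
  have "inner q \<psi>' = (\<Sum>i\<in>UNIV. q$i * min 1 (\<psi>$i - c))" by (simp add: inner_vec_def \<psi>'_def)
  also have "\<dots> \<le> (\<Sum>i\<in>UNIV. q$i * (\<psi>$i - c))"
  proof (intro sum_mono mult_left_mono)
    fix i show "0 \<le> q$i" using q by (simp add: sx_def)
  qed simp
  also have "\<dots> = inner q \<psi> - c * (\<Sum>i\<in>UNIV. q$i)"
    by (simp add: inner_vec_def right_diff_distrib sum_subtractf sum_distrib_left mult_ac)
  also have "\<dots> = inner q \<psi> - c" using q by (simp add: sx_def)
  finally have "inner q \<psi>' \<le> inner q \<psi> - c" .
  then have "Dual P s q \<psi>' \<le> Dual P s q \<psi>" using I by (simp add: Dual_def)
  then show ?thesis using box by blast
qed

lemma Dual_min: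
  assumes q: "q \<in> sx"
  shows "\<exists>\<psi>\<in>box01. \<forall>\<psi>'. Dual P s q \<psi> \<le> Dual P s q \<psi>'"
proof -
  have "compact (box01 :: (real^'k) set)" by (simp add: box01_def)
  moreover have "box01 \<noteq> ({} :: (real^'k) set)" using box01_iff[of 0] by auto
  ultimately have "\<exists>\<psi>0\<in>box01. \<forall>\<psi>\<in>box01. Dual P s q \<psi>0 \<le> Dual P s q \<psi>"
    by (rule continuous_attains_inf[OF _ _ Dual_cont[OF q]])
  then obtain \<psi>0 where \<psi>0: "\<psi>0 \<in> box01" "\<And>\<psi>. \<psi> \<in> box01 \<Longrightarrow> Dual P s q \<psi>0 \<le> Dual P s q \<psi>"
    by blast
  have "Dual P s q \<psi>0 \<le> Dual P s q \<psi>" for \<psi>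
  proof -
    obtain \<psi>' where "\<psi>' \<in> box01" "Dual P s q \<psi>' \<le> Dual P s q \<psi>" using Dual_box[OF q, of \<psi>] by blast
    then show ?thesis using \<psi>0(2)[of \<psi>'] by linarith
  qed
  then show ?thesis using \<psi>0(1) by blast
qed

end


definition Tset :: "real^'k \<Rightarrow> real^'k \<Rightarrow> 'k set" where
  "Tset \<psi> t = {i. t$i - \<psi>$i = mx \<psi> t}"

lemma Tset_ne: "Tset \<psi> t \<noteq> {}"
  unfolding Tset_def mx_def using Max_in[of "range (\<lambda>j. t$j - \<psi>$j)"] by fastforce

lemma mx_perturb:
  "\<exists>\<epsilon>>0. \<forall>\<tau>. 0 < \<tau> \<and> \<tau> < \<epsilon> \<longrightarrow>
     mx (\<psi> + \<tau> *\<^sub>R d) t = mx \<psi> t - \<tau> * Min ((\<lambda>i. d$i) ` Tset \<psi> t)"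
proof -
  obtain \<epsilon> where "\<epsilon> > 0" and e: "\<forall>\<tau>. 0 < \<tau> \<and> \<tau> < \<epsilon> \<longrightarrow>
     Max (range (\<lambda>j. (t$j - \<psi>$j) - \<tau> * d$j)) = Max (range (\<lambda>j. t$j - \<psi>$j))
       - \<tau> * Min ((\<lambda>i. d$i) ` {i. t$i - \<psi>$i = Max (range (\<lambda>j. t$j - \<psi>$j))})"
    using max_perturb[of "\<lambda>j. t$j - \<psi>$j" "\<lambda>j. d$j"] by blast
  show ?thesis
    by (rule exI[of _ \<epsilon>]) (use \<open>\<epsilon> > 0\<close> e in \<open>auto simp: mx_def Tset_def algebra_simps\<close>)
qed

lemma sum_ind_one: "(\<Sum>i\<in>UNIV. (if c = i then 1 else 0 :: real)) = 1" for c :: "'a::finite"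
  using sum.delta'[of "UNIV::'a set" c "\<lambda>_. 1::real"] by simp

context semi
begin

lemma T_meas[measurable]: "(\<lambda>x. Tset \<psi> (s x)) \<in> measurable P (count_space UNIV)"
proof (subst measurable_count_space_eq2_countable, intro conjI ballI)
  fix S :: "'k set"
  have "(\<lambda>x. Tset \<psi> (s x)) -` {S} \<inter> space P = {x\<in>space P. \<forall>i. (i \<in> S) = (s x $ i - \<psi>$i = mx \<psi> (s x))}"
    by (auto simp: Tset_def)
  also have "\<dots> \<in> sets P" by measurable
  finally show "(\<lambda>x. Tset \<psi> (s x)) -` {S} \<inter> space P \<in> sets P" .
qed auto

lemma T_comp_meas[measurable]: "(\<lambda>x. g (Tset \<psi> (s x)) :: real) \<in> borel_measurable P"
  using measurable_compose[OF T_meas, of g borel] by simp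

lemma int_bounded:
  fixes g :: "'x \<Rightarrow> real"
  assumes "g \<in> borel_measurable P" "\<And>x. \<bar>g x\<bar> \<le> B"
  shows "integrable P g"
  by (rule integrable_const_bound[where B=B]) (use assms in auto)

lemma Min_abs_le: "\<bar>Min ((\<lambda>i. d$i) ` S)\<bar> \<le> (\<Sum>i\<in>UNIV. \<bar>d$i\<bar>)" if "S \<noteq> {}" for S :: "'k set" and d :: "real^'k"
proof -
  have "Min ((\<lambda>i. d$i) ` S) \<in> (\<lambda>i. d$i) ` S" using that by (intro Min_in) auto
  then obtain i where "Min ((\<lambda>i. d$i) ` S) = d$i" by blast
  then show ?thesis using member_le_sum[of i UNIV "\<lambda>i. \<bar>d$i\<bar>"] by simp
qed

lemma dir_ineq:
  assumes q: "q \<in> sx" and opt: "\<And>\<psi>'. Dual P s q \<psi> \<le> Dual P s q \<psi>'"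
  shows "(\<integral>x. Min ((\<lambda>i. d$i) ` Tset \<psi> (s x)) \<partial>P) \<le> inner q d"
proof -
  define \<tau> :: "nat \<Rightarrow> real" where "\<tau> n = 1 / Suc n" for n
  have \<tau>pos: "\<tau> n > 0" for n by (simp add: \<tau>_def)
  define B where "B = (\<Sum>i\<in>UNIV. \<bar>d$i\<bar>)"
  define \<phi> where "\<phi> = (\<lambda>n x. (mx (\<psi> + \<tau> n *\<^sub>R d) (s x) - mx \<psi> (s x)) / \<tau> n)"
  define L where "L = (\<lambda>x. - Min ((\<lambda>i. d$i) ` Tset \<psi> (s x)))"
  have \<phi>meas[measurable]: "\<phi> n \<in> borel_measurable P" for n unfolding \<phi>_def by measurable
  have Lmeas[measurable]: "L \<in> borel_measurable P" unfolding L_def by measurable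
  have \<phi>bound: "\<bar>\<phi> n x\<bar> \<le> B" for n x
  proof -
    have "\<bar>mx (\<psi> + \<tau> n *\<^sub>R d) (s x) - mx \<psi> (s x)\<bar> \<le> (\<Sum>i\<in>UNIV. \<bar>(\<psi> + \<tau> n *\<^sub>R d)$i - \<psi>$i\<bar>)"
      by (rule mx_lip)
    also have "\<dots> = \<tau> n * B" using \<tau>pos[of n] by (simp add: B_def abs_mult sum_distrib_left)
    finally show ?thesis using \<tau>pos[of n] by (simp add: \<phi>_def abs_divide divide_le_eq mult.commute)
  qed
  have step: "0 \<le> inner q d + integral\<^sup>L P (\<phi> n)" for n
  proof -
    have "Dual P s q \<psi> \<le> Dual P s q (\<psi> + \<tau> n *\<^sub>R d)" by (rule opt)
    then have "0 \<le> \<tau> n * inner q d + ((\<integral>x. mx (\<psi> + \<tau> n *\<^sub>R d) (s x) \<partial>P) - (\<integral>x. mx \<psi> (s x) \<partial>P))"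
      by (simp add: Dual_def inner_add_right)
    also have "(\<integral>x. mx (\<psi> + \<tau> n *\<^sub>R d) (s x) \<partial>P) - (\<integral>x. mx \<psi> (s x) \<partial>P) = \<tau> n * integral\<^sup>L P (\<phi> n)"
    proof -
      have "integral\<^sup>L P (\<phi> n) = ((\<integral>x. mx (\<psi> + \<tau> n *\<^sub>R d) (s x) \<partial>P) - (\<integral>x. mx \<psi> (s x) \<partial>P)) / \<tau> n"
        unfolding \<phi>_def using int_mx by simp
      then show ?thesis using \<tau>pos[of n] by simp
    qed
    finally have "0 \<le> \<tau> n * (inner q d + integral\<^sup>L P (\<phi> n))" by (simp add: algebra_simps)
    then show ?thesis using \<tau>pos[of n] by (simp add: zero_le_mult_iff)
  qed
  have lim: "(\<lambda>n. integral\<^sup>L P (\<phi> n)) \<longlonglongrightarrow> integral\<^sup>L P L"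
  proof (rule integral_dominated_convergence[where w="\<lambda>_. B"])
    show "AE x in P. norm (\<phi> n x) \<le> B" for n using \<phi>bound by simp
    show "AE x in P. (\<lambda>n. \<phi> n x) \<longlonglongrightarrow> L x"
    proof (rule AE_I2)
      fix x
      obtain \<epsilon> where "\<epsilon> > 0" and e: "\<forall>t. 0 < t \<and> t < \<epsilon> \<longrightarrow>
          mx (\<psi> + t *\<^sub>R d) (s x) = mx \<psi> (s x) - t * Min ((\<lambda>i. d$i) ` Tset \<psi> (s x))"
        using mx_perturb by blast
      have "\<tau> \<longlonglongrightarrow> 0" unfolding \<tau>_def using LIMSEQ_inverse_real_of_nat by (simp add: inverse_eq_divide)
      then have "eventually (\<lambda>n. \<tau> n < \<epsilon>) sequentially" using \<open>\<epsilon> > 0\<close> by (rule order_tendstoD)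
      then have "eventually (\<lambda>n. \<phi> n x = L x) sequentially"
      proof eventually_elim
        case (elim n)
        then show ?case using e \<tau>pos[of n] by (simp add: \<phi>_def L_def)
      qed
      then show "(\<lambda>n. \<phi> n x) \<longlonglongrightarrow> L x" by (rule tendsto_eventually)
    qed
  qed auto
  have "0 \<le> inner q d + integral\<^sup>L P L"
    by (rule LIMSEQ_le_const[OF tendsto_add[OF tendsto_const lim]]) (use step in auto)
  moreover have "integral\<^sup>L P L = - (\<integral>x. Min ((\<lambda>i. d$i) ` Tset \<psi> (s x)) \<partial>P)"
    by (simp add: L_def)
  ultimately show ?thesis by linarith
qed

end


definition kern :: "'x measure \<Rightarrow> ('x \<Rightarrow> 'k::finite \<Rightarrow> real) \<Rightarrow> bool" where
  "kern P H \<longleftrightarrow> (\<forall>i. (\<lambda>x. H x i) \<in> borel_measurable P) \<and> (\<forall>x i. 0 \<le> H x i) \<and> (\<forall>x. (\<Sum>i\<in>UNIV. H x i) = 1)"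

definition marg :: "'x measure \<Rightarrow> ('x \<Rightarrow> 'k::finite \<Rightarrow> real) \<Rightarrow> real^'k" where
  "marg P H = (\<chi> i. \<integral>x. H x i \<partial>P)"

definition gain :: "'x measure \<Rightarrow> ('x \<Rightarrow> real^'k) \<Rightarrow> ('x \<Rightarrow> 'k \<Rightarrow> real) \<Rightarrow> real" where
  "gain P s H = (\<integral>x. (\<Sum>i\<in>UNIV. H x i * s x $ i) \<partial>P)"

lemma sum_if_mult: "(\<Sum>j\<in>UNIV. (if j = i then 1 else 0) * m j) = (m i :: real)" for i :: "'a::finite"
proof -
  have "(\<Sum>j\<in>UNIV. (if j = i then 1 else 0) * m j) = (\<Sum>j\<in>UNIV. if j = i then m j else 0)"
    by (intro sum.cong) auto
  then show ?thesis by simp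
qed

lemma sum_if_mult2: "(\<Sum>j\<in>UNIV. (if i = j then 1 else 0) * m j) = (m i :: real)" for i :: "'a::finite"
  using sum_if_mult[of i m] by (simp add: eq_commute)

lemma kern_le1: "kern P H \<Longrightarrow> H x i \<le> 1"
  unfolding kern_def using member_le_sum[of i UNIV "H x"] by auto

context semi
begin

lemma int_index:
  fixes g :: "'x \<Rightarrow> 'k" and c :: "'k \<Rightarrow> real"
  assumes g[measurable]: "g \<in> measurable P (count_space UNIV)"
  shows "(\<integral>x. c (g x) \<partial>P) = (\<Sum>i\<in>UNIV. c i * measure P {x\<in>space P. g x = i})"
proof -
  have "(\<integral>x. c (g x) \<partial>P) = (\<integral>x. (\<Sum>i\<in>UNIV. c i * indicator {x\<in>space P. g x = i} x) \<partial>P)"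
  proof (rule Bochner_Integration.integral_cong[OF refl])
    fix x assume "x \<in> space P"
    then show "c (g x) = (\<Sum>i\<in>UNIV. c i * indicator {x\<in>space P. g x = i} x)"
      using sum.delta'[of "UNIV::'k set" "g x" c] by (simp add: indicator_def if_distrib cong: if_cong)
  qed
  also have "\<dots> = (\<Sum>i\<in>UNIV. c i * measure P {x\<in>space P. g x = i})"
  proof -
    have "integrable P (indicator {x\<in>space P. g x = i} :: 'x \<Rightarrow> real)" for i
    proof (rule integrable_real_indicator)
      show "{x\<in>space P. g x = i} \<in> sets P" by measurable
      then show "emeasure P {x\<in>space P. g x = i} < \<infinity>" by (simp add: less_top[symmetric])
    qed
    then show ?thesis by (subst Bochner_Integration.integral_sum) (auto intro!: integrable_mult_right)
  qed
  finally show ?thesis .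
qed

lemma kern_int:
  assumes "kern P H"
  shows "integrable P (\<lambda>x. H x i)" "integrable P (\<lambda>x. H x i * s x $ i)"
proof -
  have m[measurable]: "(\<lambda>x. H x i) \<in> borel_measurable P" using assms by (simp add: kern_def)
  have b: "\<bar>H x i\<bar> \<le> 1" for x using assms kern_le1[OF assms, of x i] by (auto simp: kern_def)
  show "integrable P (\<lambda>x. H x i)" by (rule int_bounded[OF m b])
  show "integrable P (\<lambda>x. H x i * s x $ i)"
  proof (rule integrable_const_bound[where B=1])
    show "AE x in P. norm (H x i * s x $ i) \<le> 1"
      using s_ae
    proof eventually_elim
      case (elim x)
      then have "\<bar>s x $ i\<bar> \<le> 1" by (rule sx_abs)
      then show ?case using b[of x] by (simp add: abs_mult mult_le_one)
    qed
  qed measurable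
qed

theorem weak_dual:
  assumes H: "kern P H"
  shows "gain P s H \<le> Dual P s (marg P H) \<psi>"
proof -
  have m[measurable]: "(\<lambda>x. H x i) \<in> borel_measurable P" for i using H by (simp add: kern_def)
  have pt: "(\<Sum>i\<in>UNIV. H x i * s x $ i) \<le> mx \<psi> (s x) + (\<Sum>i\<in>UNIV. H x i * \<psi>$i)" for x
  proof -
    have "(\<Sum>i\<in>UNIV. H x i * s x $ i) = (\<Sum>i\<in>UNIV. H x i * (s x $ i - \<psi>$i)) + (\<Sum>i\<in>UNIV. H x i * \<psi>$i)"
      by (simp add: algebra_simps sum.distrib[symmetric])
    also have "(\<Sum>i\<in>UNIV. H x i * (s x $ i - \<psi>$i)) \<le> (\<Sum>i\<in>UNIV. H x i * mx \<psi> (s x))"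
      using H by (intro sum_mono mult_left_mono) (auto simp: kern_def mx_def)
    also have "\<dots> = mx \<psi> (s x)" using H by (simp add: kern_def sum_distrib_right[symmetric])
    finally show ?thesis by simp
  qed
  have "gain P s H \<le> (\<integral>x. mx \<psi> (s x) + (\<Sum>i\<in>UNIV. H x i * \<psi>$i) \<partial>P)"
    unfolding gain_def
    by (intro Bochner_Integration.integral_mono pt)
       (auto intro!: Bochner_Integration.integrable_sum integrable_mult_left kern_int[OF H] int_mx)
  also have "\<dots> = (\<integral>x. mx \<psi> (s x) \<partial>P) + (\<Sum>i\<in>UNIV. (\<integral>x. H x i \<partial>P) * \<psi>$i)"
    by (subst Bochner_Integration.integral_add)
       (auto intro!: Bochner_Integration.integrable_sum integrable_mult_left kern_int[OF H] int_mx
          simp: Bochner_Integration.integral_sum[OF integrable_mult_left[OF kern_int(1)[OF H]]])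
  also have "\<dots> = Dual P s (marg P H) \<psi>"
    by (simp add: Dual_def marg_def inner_vec_def)
  finally show ?thesis .
qed

theorem strong:
  assumes q: "q \<in> sx"
  shows "\<exists>\<psi>\<in>box01. (\<forall>\<psi>'. Dual P s q \<psi> \<le> Dual P s q \<psi>') \<and>
           (\<exists>H. kern P H \<and> marg P H = q \<and> gain P s H = Dual P s q \<psi>)"
proof -
  obtain \<psi> where \<psi>: "\<psi> \<in> box01" "\<And>\<psi>'. Dual P s q \<psi> \<le> Dual P s q \<psi>'" using Dual_min[OF q] by blast
  define T where "T x = Tset \<psi> (s x)" for x
  have T_ne: "T x \<noteq> {}" for x unfolding T_def by (rule Tset_ne)
  have Tm[measurable]: "T \<in> measurable P (count_space UNIV)" unfolding T_def[abs_def] by (rule T_meas)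
  have gm[measurable]: "(\<lambda>x. \<sigma> (T x)) \<in> measurable P (count_space UNIV)" for \<sigma> :: "'k set \<Rightarrow> 'k"
    using measurable_compose[OF Tm, of \<sigma> "count_space UNIV"] by simp
  define Sel where "Sel = {\<sigma> :: 'k set \<Rightarrow> 'k. \<forall>S. S \<noteq> {} \<longrightarrow> \<sigma> S \<in> S}"
  define vf where "vf \<sigma> = (\<chi> i. measure P {x\<in>space P. \<sigma> (T x) = i})" for \<sigma> :: "'k set \<Rightarrow> 'k"
  define V where "V = vf ` Sel"
  have finV: "finite V" unfolding V_def by simp
  have inner_vf: "inner a (vf \<sigma>) = (\<integral>x. a $ (\<sigma> (T x)) \<partial>P)" for a \<sigma>
    by (subst int_index[OF gm, of "\<lambda>i. a$i" \<sigma>]) (simp add: vf_def inner_vec_def)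
  have inhull: "q \<in> convex hull V"
  proof (rule ccontr)
    assume nq: "q \<notin> convex hull V"
    have "closed (convex hull V)" by (intro compact_imp_closed compact_convex_hull finite_imp_compact finV)
    then obtain a b where ab: "inner a q < b" "\<And>y. y \<in> convex hull V \<Longrightarrow> inner a y > b"
      using separating_hyperplane_closed_point[OF convex_convex_hull _ nq] by blast
    define \<sigma>0 where "\<sigma>0 S = (SOME i. i \<in> S \<and> a$i = Min ((\<lambda>j. a$j) ` S))" for S :: "'k set"
    have \<sigma>0: "\<sigma>0 S \<in> S \<and> a$(\<sigma>0 S) = Min ((\<lambda>j. a$j) ` S)" if "S \<noteq> {}" for S
    proof -
      have "Min ((\<lambda>j. a$j) ` S) \<in> (\<lambda>j. a$j) ` S" using that by (intro Min_in) auto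
      then have "\<exists>i. i \<in> S \<and> a$i = Min ((\<lambda>j. a$j) ` S)" by auto
      then show ?thesis unfolding \<sigma>0_def by (rule someI_ex)
    qed
    have "\<sigma>0 \<in> Sel" using \<sigma>0 by (auto simp: Sel_def)
    then have "vf \<sigma>0 \<in> convex hull V" unfolding V_def by (intro hull_inc imageI)
    then have 1: "inner a (vf \<sigma>0) > b" by (rule ab(2))
    have "inner a (vf \<sigma>0) = (\<integral>x. Min ((\<lambda>j. a$j) ` Tset \<psi> (s x)) \<partial>P)"
      unfolding inner_vf using \<sigma>0[OF T_ne] by (simp add: T_def)
    also have "\<dots> \<le> inner q a" by (rule dir_ineq[OF q \<psi>(2)])
    finally show False using ab(1) 1 by (simp add: inner_commute)
  qed
  obtain u where u: "\<And>y. y \<in> V \<Longrightarrow> 0 \<le> u y" "sum u V = 1" "(\<Sum>y\<in>V. u y *\<^sub>R y) = q"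
    using inhull unfolding convex_hull_finite[OF finV] by blast
  define \<sigma>v where "\<sigma>v y = inv_into Sel vf y" for y
  have \<sigma>v: "\<sigma>v y \<in> Sel" "vf (\<sigma>v y) = y" if "y \<in> V" for y
    using that unfolding V_def \<sigma>v_def by (auto intro: inv_into_into simp: f_inv_into_f[OF imageI])
  have \<sigma>vT: "\<sigma>v y (T x) \<in> T x" if "y \<in> V" for y x using \<sigma>v(1)[OF that] T_ne[of x] by (auto simp: Sel_def)
  define ind where "ind y i x = (if \<sigma>v y (T x) = i then 1 else 0 :: real)" for y i x
  have ind_meas[measurable]: "ind y i \<in> borel_measurable P" for y i
    using measurable_compose[OF gm[of "\<sigma>v y"], of "\<lambda>j. if j = i then 1 else 0 :: real" borel]
    by (simp add: ind_def[abs_def])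
  have ind_int: "(\<integral>x. ind y i x \<partial>P) = measure P {x\<in>space P. \<sigma>v y (T x) = i}" for y i
    unfolding ind_def using int_index[OF gm[of "\<sigma>v y"], of "\<lambda>j. if j = i then 1 else 0"]
    by (simp only: sum_if_mult)
  have ind_intg: "integrable P (ind y i)" for y i
    by (rule int_bounded[where B=1]) (auto simp: ind_def)
  define H where "H x i = (\<Sum>y\<in>V. u y * ind y i x)" for x i
  have Hm[measurable]: "(\<lambda>x. H x i) \<in> borel_measurable P" for i unfolding H_def by measurable
  have Hsum: "(\<Sum>i\<in>UNIV. H x i) = 1" for x
  proof -
    have "(\<Sum>i\<in>UNIV. H x i) = (\<Sum>y\<in>V. u y * (\<Sum>i\<in>UNIV. ind y i x))"
      unfolding H_def by (simp add: sum.swap[of _ V] sum_distrib_left)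
    also have "\<dots> = (\<Sum>y\<in>V. u y)" by (simp add: ind_def sum_ind_one)
    finally show ?thesis using u(2) by simp
  qed
  have kernH: "kern P H"
    unfolding kern_def using Hsum u(1) by (auto simp: H_def ind_def intro!: sum_nonneg)
  have margH: "marg P H = q"
  proof -
    have "(\<integral>x. H x i \<partial>P) = q$i" for i
    proof -
      have "(\<integral>x. H x i \<partial>P) = (\<Sum>y\<in>V. u y * measure P {x\<in>space P. \<sigma>v y (T x) = i})"
        unfolding H_def using ind_intg by (simp add: ind_int)
      also have "\<dots> = (\<Sum>y\<in>V. u y * y$i)"
      proof (intro sum.cong refl)
        fix y assume "y \<in> V"
        then have "vf (\<sigma>v y) $ i = y $ i" using \<sigma>v(2) by simp
        then show "u y * measure P {x\<in>space P. \<sigma>v y (T x) = i} = u y * y$i" by (simp add: vf_def)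
      qed
      also have "\<dots> = q$i" using u(3) by (auto simp: vec_eq_iff)
      finally show ?thesis .
    qed
    then show ?thesis by (simp add: marg_def vec_eq_iff)
  qed
  have pt: "(\<Sum>i\<in>UNIV. H x i * s x $ i) = mx \<psi> (s x) + (\<Sum>y\<in>V. u y * \<psi> $ (\<sigma>v y (T x)))" for x
  proof -
    have "(\<Sum>i\<in>UNIV. H x i * s x $ i) = (\<Sum>y\<in>V. u y * (\<Sum>i\<in>UNIV. ind y i x * s x $ i))"
      unfolding H_def by (simp add: sum_distrib_right sum_distrib_left sum.swap[of _ V] mult.assoc)
    also have "\<dots> = (\<Sum>y\<in>V. u y * s x $ (\<sigma>v y (T x)))"
      by (intro sum.cong refl) (simp only: ind_def sum_if_mult2)
    also have "\<dots> = (\<Sum>y\<in>V. u y * (mx \<psi> (s x) + \<psi> $ (\<sigma>v y (T x))))"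
    proof (intro sum.cong refl)
      fix y assume "y \<in> V"
      then have "s x $ (\<sigma>v y (T x)) - \<psi> $ (\<sigma>v y (T x)) = mx \<psi> (s x)"
        using \<sigma>vT[of y x] by (simp add: T_def Tset_def)
      then show "u y * s x $ (\<sigma>v y (T x)) = u y * (mx \<psi> (s x) + \<psi> $ (\<sigma>v y (T x)))" by simp
    qed
    also have "\<dots> = mx \<psi> (s x) * sum u V + (\<Sum>y\<in>V. u y * \<psi> $ (\<sigma>v y (T x)))"
      by (simp add: algebra_simps sum.distrib sum_distrib_left sum_distrib_right)
    finally show ?thesis using u(2) by simp
  qed
  have psi_int: "(\<integral>x. \<psi> $ (\<sigma>v y (T x)) \<partial>P) = (\<Sum>i\<in>UNIV. \<psi>$i * y$i)" if "y \<in> V" for y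
  proof -
    have e: "measure P {x\<in>space P. \<sigma>v y (T x) = i} = y$i" for i
      using \<sigma>v(2)[OF that] by (auto simp: vf_def vec_eq_iff)
    show ?thesis using int_index[OF gm[of "\<sigma>v y"], of "\<lambda>i. \<psi>$i"] by (simp add: e)
  qed
  have psi_intg: "integrable P (\<lambda>x. \<psi> $ (\<sigma>v y (T x)))" for y
  proof (rule int_bounded[where B="\<Sum>i\<in>UNIV. \<bar>\<psi>$i\<bar>"])
    show "(\<lambda>x. \<psi> $ (\<sigma>v y (T x))) \<in> borel_measurable P"
      using measurable_compose[OF gm[of "\<sigma>v y"], of "\<lambda>j. \<psi>$j" borel] by simp
    show "\<bar>\<psi> $ (\<sigma>v y (T x))\<bar> \<le> (\<Sum>i\<in>UNIV. \<bar>\<psi>$i\<bar>)" for x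
      by (rule member_le_sum[of _ UNIV "\<lambda>i. \<bar>\<psi>$i\<bar>", simplified])
  qed
  have "gain P s H = (\<integral>x. mx \<psi> (s x) + (\<Sum>y\<in>V. u y * \<psi> $ (\<sigma>v y (T x))) \<partial>P)"
    unfolding gain_def pt ..
  also have "\<dots> = (\<integral>x. mx \<psi> (s x) \<partial>P) + (\<Sum>y\<in>V. u y * (\<Sum>i\<in>UNIV. \<psi>$i * y$i))"
    using psi_intg int_mx by (simp add: psi_int)
  also have "(\<Sum>y\<in>V. u y * (\<Sum>i\<in>UNIV. \<psi>$i * y$i)) = inner q \<psi>"
  proof -
    have "inner q \<psi> = (\<Sum>i\<in>UNIV. (\<Sum>y\<in>V. u y * y$i) * \<psi>$i)"
      using u(3) by (auto simp: inner_vec_def)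
    then show ?thesis by (simp add: sum_distrib_left sum_distrib_right sum.swap[of _ V] mult_ac)
  qed
  finally have "gain P s H = Dual P s q \<psi>" by (simp add: Dual_def)
  then show ?thesis using \<psi> kernH margH by blast
qed

end


definition optv :: "'x measure \<Rightarrow> ('x \<Rightarrow> real^'k) \<Rightarrow> real^'k \<Rightarrow> real" where
  "optv P s q = (INF \<psi>. Dual P s q \<psi>)"

lemma compact_sx: "compact (sx :: (real^'k) set)"
proof -
  have "sx = {x::real^'k. \<forall>i. 0 \<le> x$i} \<inter> {x. (\<Sum>i\<in>UNIV. x$i) = 1}" by (auto simp: sx_def)
  moreover have "closed {x::real^'k. \<forall>i. 0 \<le> x$i}"
    by (simp only: Collect_all_eq) (intro closed_INT ballI closed_Collect_le continuous_intros)
  moreover have "closed {x::real^'k. (\<Sum>i\<in>UNIV. x$i) = 1}"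
    by (intro closed_Collect_eq continuous_intros)
  ultimately have "closed (sx :: (real^'k) set)" by (metis closed_Int)
  moreover have "bounded (sx :: (real^'k) set)"
  proof -
    have "sx \<subseteq> cbox (0::real^'k) 1"
    proof
      fix x :: "real^'k" assume "x \<in> sx"
      then show "x \<in> cbox 0 1" using sx_le1[of x] by (auto simp: mem_box_cart sx_def)
    qed
    then show ?thesis by (rule bounded_subset[OF bounded_cbox])
  qed
  ultimately show ?thesis by (simp add: compact_eq_bounded_closed)
qed

lemma sx_ne: "(\<chi> i. 1 / real CARD('k)) \<in> (sx :: (real^'k) set)"
  by (simp add: sx_def)

context semi
begin

lemma optv_min:
  assumes q: "q \<in> sx" and \<psi>: "\<And>\<psi>'. Dual P s q \<psi> \<le> Dual P s q \<psi>'"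
  shows "optv P s q = Dual P s q \<psi>"
  unfolding optv_def
proof (rule cInf_eq_minimum)
  show "Dual P s q \<psi> \<in> range (Dual P s q)" by (rule rangeI)
  fix x assume "x \<in> range (Dual P s q)"
  then obtain \<psi>' where "x = Dual P s q \<psi>'" by blast
  then show "Dual P s q \<psi> \<le> x" using \<psi>[of \<psi>'] by simp
qed

lemma optv_le: "q \<in> sx \<Longrightarrow> optv P s q \<le> Dual P s q \<psi>"
proof -
  assume q: "q \<in> sx"
  obtain \<psi>0 where "\<psi>0 \<in> box01" and m: "\<And>\<psi>'. Dual P s q \<psi>0 \<le> Dual P s q \<psi>'" using Dual_min[OF q] by blast
  then show ?thesis using optv_min[OF q m] m[of \<psi>] by simp
qed

lemma optv_strong:
  assumes q: "q \<in> sx"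
  shows "\<exists>\<psi>\<in>box01. optv P s q = Dual P s q \<psi> \<and> (\<exists>H. kern P H \<and> marg P H = q \<and> gain P s H = optv P s q)"
proof -
  obtain \<psi> H where "\<psi> \<in> box01" and m: "\<And>\<psi>'. Dual P s q \<psi> \<le> Dual P s q \<psi>'"
    and H: "kern P H" "marg P H = q" "gain P s H = Dual P s q \<psi>"
    using strong[OF q] by blast
  then show ?thesis using optv_min[OF q m] by auto
qed

lemma marg_sx: "kern P H \<Longrightarrow> marg P H \<in> sx" for H :: "'x \<Rightarrow> 'k \<Rightarrow> real"
proof -
  assume H: "kern P H"
  have "(\<Sum>i\<in>UNIV. \<integral>x. H x i \<partial>P) = (\<integral>x. (\<Sum>i\<in>UNIV. H x i) \<partial>P)"
    by (subst Bochner_Integration.integral_sum) (auto intro: kern_int[OF H])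
  also have "\<dots> = 1" using H by (simp add: kern_def prob_space)
  moreover have "0 \<le> (\<integral>x. H x i \<partial>P)" for i using H by (intro integral_nonneg_AE) (auto simp: kern_def)
  ultimately show ?thesis by (simp add: sx_def marg_def)
qed

lemma gain_le_optv: "kern P H \<Longrightarrow> gain P s H \<le> optv P s (marg P H)" for H :: "'x \<Rightarrow> 'k \<Rightarrow> real"
proof -
  assume H: "kern P H"
  obtain \<psi> where "optv P s (marg P H) = Dual P s (marg P H) \<psi>" using optv_strong[OF marg_sx[OF H]] by blast
  then show ?thesis using weak_dual[OF H, of \<psi>] by simp
qed

lemma optv_lip:
  assumes q: "q \<in> sx" and q': "q' \<in> sx"
  shows "optv P s q \<le> optv P s q' + (\<Sum>i\<in>UNIV. \<bar>q$i - q'$i\<bar>)"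
proof -
  obtain \<psi> where \<psi>: "\<psi> \<in> box01" "optv P s q' = Dual P s q' \<psi>" using optv_strong[OF q'] by blast
  have "inner q \<psi> - inner q' \<psi> = (\<Sum>i\<in>UNIV. (q$i - q'$i) * \<psi>$i)"
    by (simp add: inner_vec_def sum_subtractf left_diff_distrib)
  also have "\<dots> \<le> (\<Sum>i\<in>UNIV. \<bar>q$i - q'$i\<bar>)"
  proof (intro sum_mono)
    fix i have "0 \<le> \<psi>$i" "\<psi>$i \<le> 1" using \<psi>(1) by (auto simp: box01_iff)
    then have "(q$i - q'$i) * \<psi>$i \<le> \<bar>q$i - q'$i\<bar> * \<psi>$i" by (intro mult_right_mono) auto
    also have "\<dots> \<le> \<bar>q$i - q'$i\<bar> * 1" using \<open>\<psi>$i \<le> 1\<close> by (intro mult_left_mono) auto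
    finally show "(q$i - q'$i) * \<psi>$i \<le> \<bar>q$i - q'$i\<bar>" by simp
  qed
  finally have "Dual P s q \<psi> \<le> Dual P s q' \<psi> + (\<Sum>i\<in>UNIV. \<bar>q$i - q'$i\<bar>)" by (simp add: Dual_def)
  then show ?thesis using optv_le[OF q, of \<psi>] \<psi>(2) by linarith
qed

end

lemma cont_from_lip:
  fixes F :: "real^'k \<Rightarrow> real"
  assumes "\<And>q q'. q \<in> S \<Longrightarrow> q' \<in> S \<Longrightarrow> F q \<le> F q' + C * (\<Sum>i\<in>UNIV. \<bar>q$i - q'$i\<bar>)"
    and C: "C \<ge> 0"
  shows "continuous_on S F"
  unfolding continuous_on_iff
proof (intro ballI allI impI)
  fix q e assume q: "q \<in> S" and e: "(e::real) > 0"
  define K where "K = (C + 1) * real CARD('k)"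
  have K: "K > 0" using C by (simp add: K_def)
  show "\<exists>d>0. \<forall>q'\<in>S. dist q' q < d \<longrightarrow> dist (F q') (F q) < e"
  proof (intro exI[of _ "e / K"] conjI ballI impI)
    show "e / K > 0" using e K by simp
    fix q' assume q': "q' \<in> S" and d: "dist q' q < e / K"
    have s1: "(\<Sum>i\<in>UNIV. \<bar>q'$i - q$i\<bar>) \<le> real CARD('k) * dist q' q"
      using sum_abs_le_norm[of "q' - q"] by (simp add: dist_norm)
    have s2: "(\<Sum>i\<in>UNIV. \<bar>q$i - q'$i\<bar>) = (\<Sum>i\<in>UNIV. \<bar>q'$i - q$i\<bar>)" by (simp add: abs_minus_commute)
    have "C * (\<Sum>i\<in>UNIV. \<bar>q'$i - q$i\<bar>) \<le> C * (real CARD('k) * dist q' q)" by (intro mult_left_mono s1 C)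
    also have "\<dots> \<le> K * dist q' q" using C by (simp add: K_def algebra_simps)
    also have "\<dots> < e" using d K by (simp add: field_simps)
    finally have lt: "C * (\<Sum>i\<in>UNIV. \<bar>q'$i - q$i\<bar>) < e" .
    show "dist (F q') (F q) < e"
      using assms(1)[OF q q'] assms(1)[OF q' q] lt s2 by (simp add: dist_real_def abs_less_iff)
  qed
qed


abbreviation XA :: "nat \<Rightarrow> ('x::topological_space \<times> nat) measure" where
  "XA m \<equiv> borel \<Otimes>\<^sub>M count_space {1..m}"

locale cp =
  fixes m :: nat and \<mu> :: "('x::polish_space \<times> (real^'k) \<times> nat) measure" and f :: "'x \<Rightarrow> nat \<Rightarrow> real^'k"
  assumes cp: "classification_problem m \<mu>" and br: "bayes_regressor m \<mu> f"
begin

lemma sets_mu: "sets \<mu> = sets (triple_space m)" using cp by (simp add: classification_problem_def)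

lemma space_mu: "space \<mu> = UNIV \<times> labels \<times> {1..m}"
  using sets_eq_imp_space_eq[OF sets_mu] by (simp add: triple_space_def space_pair_measure)

lemma prob_mu: "prob_space \<mu>" using cp by (simp add: classification_problem_def)

sublocale mu: prob_space \<mu> by (rule prob_mu)

lemma meas_mu: "measurable \<mu> N = measurable (triple_space m) N"
  by (rule measurable_cong_sets[OF sets_mu refl])

lemma X_meas[measurable]: "fst \<in> measurable \<mu> borel"
  unfolding meas_mu triple_space_def by measurable

lemma Y_meas[measurable]: "(\<lambda>\<omega>. fst (snd \<omega>)) \<in> measurable \<mu> (count_space labels)"
  unfolding meas_mu triple_space_def by measurable

lemma A_meas[measurable]: "(\<lambda>\<omega>. snd (snd \<omega>)) \<in> measurable \<mu> (count_space {1..m})"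
  unfolding meas_mu triple_space_def by measurable

lemma pi_meas[measurable]: "(\<lambda>\<omega>. (fst \<omega>, snd (snd \<omega>))) \<in> measurable \<mu> (XA m)"
  by measurable

lemma F_meas[measurable]: "(\<lambda>(x, a). f x a) \<in> borel_measurable (XA m)"
  using br by (simp add: bayes_regressor_def)

lemma G_meas[measurable]: "(\<lambda>\<omega>. f (fst \<omega>) (snd (snd \<omega>))) \<in> borel_measurable \<mu>"
  using measurable_compose[OF pi_meas F_meas] by simp

lemma G_int: "integrable \<mu> (\<lambda>\<omega>. f (fst \<omega>) (snd (snd \<omega>)))"
  using br by (simp add: bayes_regressor_def case_prod_unfold)

lemma Yi_meas[measurable]: "(\<lambda>\<omega>. fst (snd \<omega>) $ i) \<in> borel_measurable \<mu>"
  using measurable_compose[OF Y_meas, of "\<lambda>y. y $ i" borel] by simp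

lemma Y_labels: "\<omega> \<in> space \<mu> \<Longrightarrow> fst (snd \<omega>) \<in> labels"
  by (auto simp: space_mu)

lemma labels_iff: "y \<in> labels \<longleftrightarrow> (\<exists>j. y = axis j 1)"
  by (auto simp: labels_def)

lemma axis_nth: "axis j (1::real) $ i = (if i = j then 1 else 0)"
  by (simp add: axis_def)

lemma Yi_bound: "\<omega> \<in> space \<mu> \<Longrightarrow> 0 \<le> fst (snd \<omega>) $ i \<and> fst (snd \<omega>) $ i \<le> 1"
  using Y_labels[of \<omega>] by (auto simp: labels_iff axis_nth)

lemma Y_sum: "\<omega> \<in> space \<mu> \<Longrightarrow> (\<Sum>i\<in>UNIV. fst (snd \<omega>) $ i) = 1"
  using Y_labels[of \<omega>] by (auto simp: labels_iff axis_nth)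

lemma int_bdd:
  fixes g :: "_ \<Rightarrow> real"
  assumes "g \<in> borel_measurable \<mu>" "\<And>\<omega>. \<omega> \<in> space \<mu> \<Longrightarrow> \<bar>g \<omega>\<bar> \<le> B"
  shows "integrable \<mu> g"
  by (rule mu.integrable_const_bound[where B=B]) (use assms in auto)

lemma Gi_int: "integrable \<mu> (\<lambda>\<omega>. g \<omega> * f (fst \<omega>) (snd (snd \<omega>)) $ i)"
  if "g \<in> borel_measurable \<mu>" "\<And>\<omega>. \<omega> \<in> space \<mu> \<Longrightarrow> \<bar>g \<omega>\<bar> \<le> 1"
proof (rule Bochner_Integration.integrable_bound[OF G_int])
  show "(\<lambda>\<omega>. g \<omega> * f (fst \<omega>) (snd (snd \<omega>)) $ i) \<in> borel_measurable \<mu>" using that(1) by measurable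
  show "AE \<omega> in \<mu>. norm (g \<omega> * f (fst \<omega>) (snd (snd \<omega>)) $ i) \<le> norm (f (fst \<omega>) (snd (snd \<omega>)))"
  proof (rule AE_I2)
    fix \<omega> assume "\<omega> \<in> space \<mu>"
    then have "\<bar>g \<omega>\<bar> \<le> 1" by (rule that(2))
    moreover have "\<bar>f (fst \<omega>) (snd (snd \<omega>)) $ i\<bar> \<le> norm (f (fst \<omega>) (snd (snd \<omega>)))" by (rule component_le_norm_cart)
    ultimately show "norm (g \<omega> * f (fst \<omega>) (snd (snd \<omega>)) $ i) \<le> norm (f (fst \<omega>) (snd (snd \<omega>)))"
      using mult_mono[of "\<bar>g \<omega>\<bar>" 1 "\<bar>f (fst \<omega>) (snd (snd \<omega>)) $ i\<bar>" "norm (f (fst \<omega>) (snd (snd \<omega>)))"]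
      by (simp add: abs_mult)
  qed
qed

lemma bayes_comp:
  assumes C: "C \<in> sets (XA m)"
  shows "(\<integral>\<omega>. indicator C (fst \<omega>, snd (snd \<omega>)) * fst (snd \<omega>) $ i \<partial>\<mu>) =
         (\<integral>\<omega>. indicator C (fst \<omega>, snd (snd \<omega>)) * f (fst \<omega>) (snd (snd \<omega>)) $ i \<partial>\<mu>)"
proof -
  have eq: "(\<integral>\<omega>. indicator C (fst \<omega>, snd (snd \<omega>)) *\<^sub>R fst (snd \<omega>) \<partial>\<mu>) =
            (\<integral>\<omega>. indicator C (fst \<omega>, snd (snd \<omega>)) *\<^sub>R f (fst \<omega>) (snd (snd \<omega>)) \<partial>\<mu>)"
    using br C by (simp add: bayes_regressor_def case_prod_unfold)
  have Ym[measurable]: "(\<lambda>\<omega>. fst (snd \<omega>)) \<in> borel_measurable \<mu>"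
    using measurable_compose[OF Y_meas, of "\<lambda>y. y" borel] by simp
  have i1: "integrable \<mu> (\<lambda>\<omega>. indicator C (fst \<omega>, snd (snd \<omega>)) *\<^sub>R fst (snd \<omega>))"
  proof (rule mu.integrable_const_bound[where B=1])
    show "AE x in \<mu>. norm (indicator C (fst x, snd (snd x)) *\<^sub>R fst (snd x)) \<le> 1"
    proof (rule AE_I2)
      fix \<omega> assume "\<omega> \<in> space \<mu>"
      then obtain j where "fst (snd \<omega>) = axis j 1" using Y_labels labels_iff by blast
      then show "norm (indicator C (fst \<omega>, snd (snd \<omega>)) *\<^sub>R fst (snd \<omega>)) \<le> 1"
        by (simp add: indicator_def)
    qed
  qed (use C in measurable)
  have i2: "integrable \<mu> (\<lambda>\<omega>. indicator C (fst \<omega>, snd (snd \<omega>)) *\<^sub>R f (fst \<omega>) (snd (snd \<omega>)))"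
    by (rule Bochner_Integration.integrable_bound[OF G_int]) (use C in \<open>measurable, auto simp: indicator_def\<close>)
  have "(\<integral>\<omega>. indicator C (fst \<omega>, snd (snd \<omega>)) * fst (snd \<omega>) $ i \<partial>\<mu>) =
        (\<integral>\<omega>. indicator C (fst \<omega>, snd (snd \<omega>)) *\<^sub>R fst (snd \<omega>) \<partial>\<mu>) $ i"
    using integral_bounded_linear[OF bounded_linear_vec_nth i1, of i] by simp
  also have "\<dots> = (\<integral>\<omega>. indicator C (fst \<omega>, snd (snd \<omega>)) *\<^sub>R f (fst \<omega>) (snd (snd \<omega>)) \<partial>\<mu>) $ i"
    by (simp only: eq)
  also have "\<dots> = (\<integral>\<omega>. indicator C (fst \<omega>, snd (snd \<omega>)) * f (fst \<omega>) (snd (snd \<omega>)) $ i \<partial>\<mu>)"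
    using integral_bounded_linear[OF bounded_linear_vec_nth i2, of i] by simp
  finally show ?thesis .
qed

lemma pi_space: "\<omega> \<in> space \<mu> \<Longrightarrow> (fst \<omega>, snd (snd \<omega>)) \<in> space (XA m)"
  by (auto simp: space_mu space_pair_measure)

lemma G_nonneg: "AE \<omega> in \<mu>. 0 \<le> f (fst \<omega>) (snd (snd \<omega>)) $ i"
proof -
  define Cn where "Cn = {z \<in> space (XA m). (case z of (x, a) \<Rightarrow> f x a) $ i < 0}"
  have Cn[measurable]: "Cn \<in> sets (XA m)" unfolding Cn_def by measurable
  define h where "h \<omega> = indicator Cn (fst \<omega>, snd (snd \<omega>)) * f (fst \<omega>) (snd (snd \<omega>)) $ i" for \<omega> :: "'x \<times> (real^'k) \<times> nat"
  have hint: "integrable \<mu> h" unfolding h_def by (rule Gi_int) (auto simp: indicator_def)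
  have "0 \<le> (\<integral>\<omega>. indicator Cn (fst \<omega>, snd (snd \<omega>)) * fst (snd \<omega>) $ i \<partial>\<mu>)"
    by (rule Bochner_Integration.integral_nonneg) (use Yi_bound in auto)
  then have "0 \<le> integral\<^sup>L \<mu> h" unfolding h_def bayes_comp[OF Cn] .
  have hle: "h \<omega> \<le> 0" for \<omega> by (auto simp: h_def indicator_def Cn_def)
  have "integral\<^sup>L \<mu> (\<lambda>\<omega>. - h \<omega>) = 0"
  proof -
    have "integral\<^sup>L \<mu> (\<lambda>\<omega>. - h \<omega>) \<ge> 0" by (rule Bochner_Integration.integral_nonneg) (use hle in auto)
    moreover have "integral\<^sup>L \<mu> (\<lambda>\<omega>. - h \<omega>) = - integral\<^sup>L \<mu> h" by simp
    ultimately show ?thesis using \<open>0 \<le> integral\<^sup>L \<mu> h\<close> by linarith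
  qed
  then have "AE \<omega> in \<mu>. - h \<omega> = 0"
    using integral_nonneg_eq_0_iff_AE[of \<mu> "\<lambda>\<omega>. - h \<omega>"] hint hle by auto
  then show ?thesis using AE_space
  proof eventually_elim
    case (elim \<omega>)
    show ?case
    proof (rule ccontr)
      assume "\<not> 0 \<le> f (fst \<omega>) (snd (snd \<omega>)) $ i"
      then have "(fst \<omega>, snd (snd \<omega>)) \<in> Cn" using pi_space[OF elim(2)] by (auto simp: Cn_def)
      then show False using elim(1) \<open>\<not> 0 \<le> f (fst \<omega>) (snd (snd \<omega>)) $ i\<close> by (simp add: h_def)
    qed
  qed
qed

lemma ind_int: "C \<in> sets (XA m) \<Longrightarrow> integrable \<mu> (\<lambda>\<omega>. indicator C (fst \<omega>, snd (snd \<omega>)) :: real)"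
  by (rule int_bdd[where B=1]) (auto simp: indicator_def)

lemma ind_Y_int: "C \<in> sets (XA m) \<Longrightarrow> integrable \<mu> (\<lambda>\<omega>. indicator C (fst \<omega>, snd (snd \<omega>)) * fst (snd \<omega>) $ i)"
  by (rule int_bdd[where B=1]) (use Yi_bound in \<open>auto simp: indicator_def abs_mult\<close>)

lemma ind_G_int: "C \<in> sets (XA m) \<Longrightarrow> integrable \<mu> (\<lambda>\<omega>. indicator C (fst \<omega>, snd (snd \<omega>)) * f (fst \<omega>) (snd (snd \<omega>)) $ i)"
  by (rule Gi_int) (auto simp: indicator_def)

lemma sum_eq: "C \<in> sets (XA m) \<Longrightarrow>
   (\<integral>\<omega>. indicator C (fst \<omega>, snd (snd \<omega>)) * ((\<Sum>i\<in>UNIV. f (fst \<omega>) (snd (snd \<omega>)) $ i) - 1) \<partial>\<mu>) = 0"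
proof -
  assume C[measurable]: "C \<in> sets (XA m)"
  have "(\<integral>\<omega>. indicator C (fst \<omega>, snd (snd \<omega>)) * ((\<Sum>i\<in>UNIV. f (fst \<omega>) (snd (snd \<omega>)) $ i) - 1) \<partial>\<mu>)
      = (\<integral>\<omega>. (\<Sum>i\<in>UNIV. indicator C (fst \<omega>, snd (snd \<omega>)) * f (fst \<omega>) (snd (snd \<omega>)) $ i) - indicator C (fst \<omega>, snd (snd \<omega>)) \<partial>\<mu>)"
    by (simp add: algebra_simps sum_distrib_left)
  also have "\<dots> = (\<Sum>i\<in>UNIV. \<integral>\<omega>. indicator C (fst \<omega>, snd (snd \<omega>)) * f (fst \<omega>) (snd (snd \<omega>)) $ i \<partial>\<mu>)
       - (\<integral>\<omega>. indicator C (fst \<omega>, snd (snd \<omega>)) \<partial>\<mu>)"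
    apply (subst Bochner_Integration.integral_diff)
    apply (rule Bochner_Integration.integrable_sum, rule ind_G_int[OF C])
    apply (rule ind_int[OF C])
    apply (subst Bochner_Integration.integral_sum)
    apply (rule ind_G_int[OF C])
    apply (rule refl)
    done
  also have "\<dots> = (\<Sum>i\<in>UNIV. \<integral>\<omega>. indicator C (fst \<omega>, snd (snd \<omega>)) * fst (snd \<omega>) $ i \<partial>\<mu>)
       - (\<integral>\<omega>. indicator C (fst \<omega>, snd (snd \<omega>)) \<partial>\<mu>)"
    by (simp only: bayes_comp[OF C])
  also have "\<dots> = (\<integral>\<omega>. (\<Sum>i\<in>UNIV. indicator C (fst \<omega>, snd (snd \<omega>)) * fst (snd \<omega>) $ i) - indicator C (fst \<omega>, snd (snd \<omega>)) \<partial>\<mu>)"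
    apply (subst Bochner_Integration.integral_diff)
    apply (rule Bochner_Integration.integrable_sum, rule ind_Y_int[OF C])
    apply (rule ind_int[OF C])
    apply (subst Bochner_Integration.integral_sum)
    apply (rule ind_Y_int[OF C])
    apply (rule refl)
    done
  also have "\<dots> = 0"
    by (subst Bochner_Integration.integral_cong[OF refl, where g="\<lambda>_. 0"]) (auto simp: Y_sum simp flip: sum_distrib_left)
  finally show ?thesis .
qed

lemma G_sum: "AE \<omega> in \<mu>. (\<Sum>i\<in>UNIV. f (fst \<omega>) (snd (snd \<omega>)) $ i) = 1"
proof -
  define S where "S z = (\<Sum>i\<in>UNIV. (case z of (x, a) \<Rightarrow> f x a) $ i) - 1" for z
  have Sm[measurable]: "S \<in> borel_measurable (XA m)" unfolding S_def by measurable
  have S\<omega>: "S (fst \<omega>, snd (snd \<omega>)) = (\<Sum>i\<in>UNIV. f (fst \<omega>) (snd (snd \<omega>)) $ i) - 1" for \<omega>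
    by (simp add: S_def)
  have side: "AE \<omega> in \<mu>. c * S (fst \<omega>, snd (snd \<omega>)) \<le> 0" if c: "c = 1 \<or> c = -1" for c :: real
  proof -
    define C where "C = {z \<in> space (XA m). c * S z > 0}"
    have C[measurable]: "C \<in> sets (XA m)" unfolding C_def by measurable
    define h where "h \<omega> = c * (indicator C (fst \<omega>, snd (snd \<omega>)) * S (fst \<omega>, snd (snd \<omega>)))" for \<omega> :: "'x \<times> (real^'k) \<times> nat"
    have hint: "integrable \<mu> h"
    proof -
      have "integrable \<mu> (\<lambda>\<omega>. (\<Sum>i\<in>UNIV. indicator C (fst \<omega>, snd (snd \<omega>)) * f (fst \<omega>) (snd (snd \<omega>)) $ i) - indicator C (fst \<omega>, snd (snd \<omega>)))"
        by (intro Bochner_Integration.integrable_diff Bochner_Integration.integrable_sum ind_G_int ind_int C)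
      then have "integrable \<mu> (\<lambda>\<omega>. indicator C (fst \<omega>, snd (snd \<omega>)) * ((\<Sum>i\<in>UNIV. f (fst \<omega>) (snd (snd \<omega>)) $ i) - 1))"
        by (simp only: right_diff_distrib sum_distrib_left mult_1_right)
      then show ?thesis unfolding h_def S\<omega> by simp
    qed
    have "integral\<^sup>L \<mu> h = 0" unfolding h_def S\<omega> using sum_eq[OF C] by simp
    moreover have hge: "h \<omega> \<ge> 0" for \<omega> by (auto simp: h_def C_def indicator_def)
    ultimately have "AE \<omega> in \<mu>. h \<omega> = 0" using integral_nonneg_eq_0_iff_AE[OF hint] by auto
    then show ?thesis using AE_space
    proof eventually_elim
      case (elim \<omega>)
      show ?case
      proof (rule ccontr)
        assume a: "\<not> c * S (fst \<omega>, snd (snd \<omega>)) \<le> 0"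
        then have "(fst \<omega>, snd (snd \<omega>)) \<in> C" using pi_space[OF elim(2)] by (auto simp: C_def)
        then show False using elim(1) a by (auto simp: h_def)
      qed
    qed
  qed
  have s1: "AE \<omega> in \<mu>. 1 * S (fst \<omega>, snd (snd \<omega>)) \<le> 0" by (rule side) simp
  have s2: "AE \<omega> in \<mu>. (-1) * S (fst \<omega>, snd (snd \<omega>)) \<le> 0" by (rule side) simp
  show ?thesis using s1 s2 by eventually_elim (simp add: S\<omega>)
qed

lemma G_sx: "AE \<omega> in \<mu>. f (fst \<omega>) (snd (snd \<omega>)) \<in> sx"
proof -
  have "AE \<omega> in \<mu>. \<forall>i. 0 \<le> f (fst \<omega>) (snd (snd \<omega>)) $ i"
    by (subst AE_all_countable) (simp add: G_nonneg)
  then show ?thesis using G_sum by eventually_elim (simp add: sx_def)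
qed

end


context cp
begin

lemma pi_meas'[measurable]: "(\<lambda>\<omega>. (fst \<omega>, snd (snd \<omega>))) \<in> measurable \<mu> (borel \<Otimes>\<^sub>M count_space {Suc 0..m})"
  using pi_meas by simp

lemma F_meas'[measurable]: "(\<lambda>(x, a). f x a) \<in> borel_measurable (borel \<Otimes>\<^sub>M count_space {Suc 0..m})"
  using F_meas by simp

lemma bayes_fun:
  assumes g[measurable]: "g \<in> borel_measurable (XA m)"
  shows "(\<integral>\<omega>. g (fst \<omega>, snd (snd \<omega>)) * fst (snd \<omega>) $ i \<partial>\<mu>) =
         (\<integral>\<omega>. g (fst \<omega>, snd (snd \<omega>)) * f (fst \<omega>) (snd (snd \<omega>)) $ i \<partial>\<mu>)"
proof -
  define Dy where "Dy = density \<mu> (\<lambda>\<omega>. ennreal (fst (snd \<omega>) $ i))"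
  define Dg where "Dg = density \<mu> (\<lambda>\<omega>. ennreal (max 0 (f (fst \<omega>) (snd (snd \<omega>)) $ i)))"
  have piy[measurable]: "(\<lambda>\<omega>. (fst \<omega>, snd (snd \<omega>))) \<in> measurable Dy (XA m)" unfolding Dy_def measurable_density_eq1 by (rule pi_meas)
  have pig[measurable]: "(\<lambda>\<omega>. (fst \<omega>, snd (snd \<omega>))) \<in> measurable Dg (XA m)" unfolding Dg_def measurable_density_eq1 by (rule pi_meas)
  have AEmax: "AE \<omega> in \<mu>. max 0 (f (fst \<omega>) (snd (snd \<omega>)) $ i) = f (fst \<omega>) (snd (snd \<omega>)) $ i"
    using G_nonneg[of i] by eventually_elim simp
  have eqm: "distr Dy (XA m) (\<lambda>\<omega>. (fst \<omega>, snd (snd \<omega>))) = distr Dg (XA m) (\<lambda>\<omega>. (fst \<omega>, snd (snd \<omega>)))"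
  proof (rule measure_eqI)
    show "sets (distr Dy (XA m) (\<lambda>\<omega>. (fst \<omega>, snd (snd \<omega>)))) = sets (distr Dg (XA m) (\<lambda>\<omega>. (fst \<omega>, snd (snd \<omega>))))"
      by simp
    fix C assume "C \<in> sets (distr Dy (XA m) (\<lambda>\<omega>. (fst \<omega>, snd (snd \<omega>))))"
    then have C[measurable]: "C \<in> sets (XA m)" by (simp only: sets_distr)
    have pre[measurable]: "(\<lambda>\<omega>. (fst \<omega>, snd (snd \<omega>))) -` C \<inter> space \<mu> \<in> sets \<mu>" by measurable
    have "emeasure (distr Dy (XA m) (\<lambda>\<omega>. (fst \<omega>, snd (snd \<omega>)))) C
        = emeasure Dy ((\<lambda>\<omega>. (fst \<omega>, snd (snd \<omega>))) -` C \<inter> space \<mu>)"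
      by (subst emeasure_distr) (auto simp: Dy_def)
    also have "\<dots> = (\<integral>\<^sup>+\<omega>. ennreal (fst (snd \<omega>) $ i) * indicator ((\<lambda>\<omega>. (fst \<omega>, snd (snd \<omega>))) -` C \<inter> space \<mu>) \<omega> \<partial>\<mu>)"
      unfolding Dy_def by (rule emeasure_density) measurable
    also have "\<dots> = (\<integral>\<^sup>+\<omega>. ennreal (indicator C (fst \<omega>, snd (snd \<omega>)) * fst (snd \<omega>) $ i) \<partial>\<mu>)"
      by (rule nn_integral_cong) (auto simp: indicator_def)
    also have "\<dots> = ennreal (\<integral>\<omega>. indicator C (fst \<omega>, snd (snd \<omega>)) * fst (snd \<omega>) $ i \<partial>\<mu>)"
      by (rule nn_integral_eq_integral[OF ind_Y_int[OF C]]) (use Yi_bound in auto)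
    also have "(\<integral>\<omega>. indicator C (fst \<omega>, snd (snd \<omega>)) * fst (snd \<omega>) $ i \<partial>\<mu>)
       = (\<integral>\<omega>. indicator C (fst \<omega>, snd (snd \<omega>)) * max 0 (f (fst \<omega>) (snd (snd \<omega>)) $ i) \<partial>\<mu>)"
      unfolding bayes_comp[OF C] by (rule integral_cong_AE) (use AEmax in \<open>measurable, auto elim!: AE_mp\<close>)
    also have "ennreal \<dots> = (\<integral>\<^sup>+\<omega>. ennreal (indicator C (fst \<omega>, snd (snd \<omega>)) * max 0 (f (fst \<omega>) (snd (snd \<omega>)) $ i)) \<partial>\<mu>)"
    proof (rule nn_integral_eq_integral[symmetric])
      show "integrable \<mu> (\<lambda>\<omega>. indicator C (fst \<omega>, snd (snd \<omega>)) * max 0 (f (fst \<omega>) (snd (snd \<omega>)) $ i))"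
        by (rule integrable_cong_AE_imp[OF ind_G_int[OF C]]) (use AEmax in \<open>measurable, auto elim!: AE_mp\<close>)
    qed (auto simp: indicator_def)
    also have "\<dots> = (\<integral>\<^sup>+\<omega>. ennreal (max 0 (f (fst \<omega>) (snd (snd \<omega>)) $ i)) * indicator ((\<lambda>\<omega>. (fst \<omega>, snd (snd \<omega>))) -` C \<inter> space \<mu>) \<omega> \<partial>\<mu>)"
      by (rule nn_integral_cong) (auto simp: indicator_def)
    also have "\<dots> = emeasure Dg ((\<lambda>\<omega>. (fst \<omega>, snd (snd \<omega>))) -` C \<inter> space \<mu>)"
      unfolding Dg_def by (rule emeasure_density[symmetric]) measurable
    also have "\<dots> = emeasure (distr Dg (XA m) (\<lambda>\<omega>. (fst \<omega>, snd (snd \<omega>)))) C"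
      by (subst emeasure_distr) (auto simp: Dg_def)
    finally show "emeasure (distr Dy (XA m) (\<lambda>\<omega>. (fst \<omega>, snd (snd \<omega>)))) C = emeasure (distr Dg (XA m) (\<lambda>\<omega>. (fst \<omega>, snd (snd \<omega>)))) C" .
  qed
  have "(\<integral>\<omega>. g (fst \<omega>, snd (snd \<omega>)) * fst (snd \<omega>) $ i \<partial>\<mu>) = integral\<^sup>L Dy (\<lambda>\<omega>. g (fst \<omega>, snd (snd \<omega>)))"
    unfolding Dy_def by (subst integral_density) (use Yi_bound in \<open>auto simp: mult.commute\<close>)
  also have "\<dots> = integral\<^sup>L (distr Dy (XA m) (\<lambda>\<omega>. (fst \<omega>, snd (snd \<omega>)))) g"
    by (rule integral_distr[symmetric]) measurable
  also have "\<dots> = integral\<^sup>L (distr Dg (XA m) (\<lambda>\<omega>. (fst \<omega>, snd (snd \<omega>)))) g" by (simp only: eqm)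
  also have "\<dots> = integral\<^sup>L Dg (\<lambda>\<omega>. g (fst \<omega>, snd (snd \<omega>)))"
    by (rule integral_distr) measurable
  also have "\<dots> = (\<integral>\<omega>. max 0 (f (fst \<omega>) (snd (snd \<omega>)) $ i) * g (fst \<omega>, snd (snd \<omega>)) \<partial>\<mu>)"
    unfolding Dg_def by (subst integral_density) auto
  also have "\<dots> = (\<integral>\<omega>. g (fst \<omega>, snd (snd \<omega>)) * f (fst \<omega>) (snd (snd \<omega>)) $ i \<partial>\<mu>)"
    by (rule integral_cong_AE) (use AEmax in \<open>measurable, auto elim!: AE_mp\<close>)
  finally show ?thesis .
qed

definition pa :: "nat \<Rightarrow> real" where "pa a = measure \<mu> {\<omega>\<in>space \<mu>. snd (snd \<omega>) = a}"

lemma pa_pos: "a \<in> {1..m} \<Longrightarrow> 0 < pa a"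
  using cp by (simp add: classification_problem_def pa_def)

lemma ind_eq: "indicator {\<omega>. snd (snd \<omega>) = a} \<omega> = (if snd (snd \<omega>) = a then 1 else 0 :: real)"
  by (simp add: indicator_def)

lemma cond_def': "cond_measure \<mu> a = density \<mu> (\<lambda>\<omega>. ennreal ((if snd (snd \<omega>) = a then 1 else 0) / pa a))"
  by (simp add: cond_measure_def ind_eq pa_def)

lemma Aeq_meas[measurable]: "(\<lambda>\<omega>. if snd (snd \<omega>) = a then 1 else 0 :: real) \<in> borel_measurable \<mu>"
proof -
  have "(\<lambda>\<omega>. if snd (snd \<omega>) = a then 1 else 0 :: real) = (\<lambda>c. if c = a then 1 else 0) \<circ> (\<lambda>\<omega>. snd (snd \<omega>))"
    by auto
  also have "\<dots> \<in> borel_measurable \<mu>"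
    by (rule measurable_comp[OF A_meas]) simp
  finally show ?thesis .
qed

lemma cond_int:
  fixes \<phi> :: "_ \<Rightarrow> real"
  assumes a: "a \<in> {1..m}" and [measurable]: "\<phi> \<in> borel_measurable \<mu>"
  shows "integral\<^sup>L (cond_measure \<mu> a) \<phi> = (\<integral>\<omega>. (if snd (snd \<omega>) = a then 1 else 0) * \<phi> \<omega> \<partial>\<mu>) / pa a"
proof -
  have "integral\<^sup>L (cond_measure \<mu> a) \<phi> = (\<integral>\<omega>. ((if snd (snd \<omega>) = a then 1 else 0) / pa a) * \<phi> \<omega> \<partial>\<mu>)"
    unfolding cond_def' by (subst integral_density) (use pa_pos[OF a] in auto)
  also have "\<dots> = (\<integral>\<omega>. (if snd (snd \<omega>) = a then 1 else 0) * \<phi> \<omega> \<partial>\<mu>) / pa a"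
    by (simp add: field_simps)
  finally show ?thesis .
qed

lemma cond_prob: "a \<in> {1..m} \<Longrightarrow> prob_space (cond_measure \<mu> a)"
proof (rule prob_spaceI)
  assume a: "a \<in> {1..m}"
  have sA[measurable]: "{\<omega>\<in>space \<mu>. snd (snd \<omega>) = a} \<in> sets \<mu>" by measurable
  have "emeasure (cond_measure \<mu> a) (space (cond_measure \<mu> a))
      = (\<integral>\<^sup>+\<omega>. ennreal ((if snd (snd \<omega>) = a then 1 else 0) / pa a) * indicator (space \<mu>) \<omega> \<partial>\<mu>)"
    unfolding cond_def' by (subst emeasure_density) auto
  also have "\<dots> = (\<integral>\<^sup>+\<omega>. ennreal ((if snd (snd \<omega>) = a then 1 else 0) / pa a) \<partial>\<mu>)"
    by (rule nn_integral_cong) auto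
  also have "\<dots> = ennreal (\<integral>\<omega>. (if snd (snd \<omega>) = a then 1 else 0) / pa a \<partial>\<mu>)"
    by (rule nn_integral_eq_integral) (auto intro!: int_bdd[where B="1 / pa a"] simp: pa_pos[OF a] less_imp_le)
  also have "(\<integral>\<omega>. (if snd (snd \<omega>) = a then 1 else 0) / pa a \<partial>\<mu>) = 1"
  proof -
    have "(\<integral>\<omega>. (if snd (snd \<omega>) = a then 1 else 0) \<partial>\<mu>) = (\<integral>\<omega>. indicator {\<omega>\<in>space \<mu>. snd (snd \<omega>) = a} \<omega> \<partial>\<mu>)"
      by (rule Bochner_Integration.integral_cong) (auto simp: indicator_def)
    also have "\<dots> = pa a" by (simp add: pa_def)
    finally show ?thesis using pa_pos[OF a] by simp
  qed
  finally show "emeasure (cond_measure \<mu> a) (space (cond_measure \<mu> a)) = 1" by simp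
qed

lemma PX_sets: "sets (X_law \<mu> a) = sets borel" by (simp add: X_law_def)

lemma PX_meas: "measurable (X_law \<mu> a) N = measurable borel N"
  by (rule measurable_cong_sets[OF PX_sets refl])

lemma fst_cond[measurable]: "fst \<in> measurable (cond_measure \<mu> a) borel"
  by (simp add: cond_measure_def)

lemma PX_prob: "a \<in> {1..m} \<Longrightarrow> prob_space (X_law \<mu> a)"
  unfolding X_law_def by (rule prob_space.prob_space_distr[OF cond_prob]) auto

lemma PX_int:
  fixes \<phi> :: "_ \<Rightarrow> real"
  shows "\<phi> \<in> borel_measurable borel \<Longrightarrow> integral\<^sup>L (X_law \<mu> a) \<phi> = integral\<^sup>L (cond_measure \<mu> a) (\<lambda>\<omega>. \<phi> (fst \<omega>))"
  unfolding X_law_def by (rule integral_distr) auto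

lemma sa_meas: "a \<in> {1..m} \<Longrightarrow> (\<lambda>x. f x a) \<in> borel_measurable borel"
proof -
  assume a: "a \<in> {1..m}"
  have "(\<lambda>x. (x, a)) \<in> measurable borel (XA m)"
    by (rule measurable_Pair[OF measurable_ident_sets[OF refl] measurable_const]) (use a in simp)
  from measurable_compose[OF this F_meas] show ?thesis by simp
qed

lemma semi_PX: "a \<in> {1..m} \<Longrightarrow> semi (X_law \<mu> a) (\<lambda>x. f x a)"
proof -
  assume a: "a \<in> {1..m}"
  have sm[measurable]: "(\<lambda>x. f x a) \<in> borel_measurable borel" by (rule sa_meas[OF a])
  have cl: "{x \<in> space borel. f x a \<in> sx} \<in> sets borel"
    using measurable_sets[OF sm borel_closed[OF compact_imp_closed[OF compact_sx]]]
    by (simp add: vimage_def Collect_conj_eq Int_commute)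
  have "AE \<omega> in cond_measure \<mu> a. f (fst \<omega>) a \<in> sx"
    unfolding cond_def'
  proof (subst AE_density)
    show "AE \<omega> in \<mu>. 0 < ennreal ((if snd (snd \<omega>) = a then 1 else 0) / pa a) \<longrightarrow> f (fst \<omega>) a \<in> sx"
      using G_sx by eventually_elim (auto split: if_splits)
  qed measurable
  then have "AE x in X_law \<mu> a. f x a \<in> sx"
    unfolding X_law_def by (subst AE_distr_iff) (use cl in auto)
  then show ?thesis
    by (intro semi.intro PX_prob[OF a]) (auto simp: semi_axioms_def PX_meas)
qed

end


definition Hk :: "('x \<Rightarrow> nat \<Rightarrow> real^'k \<Rightarrow> real) \<Rightarrow> nat \<Rightarrow> 'x \<Rightarrow> 'k \<Rightarrow> real" where
  "Hk h a x i = h x a (axis i 1)"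

lemma inj_axis: "inj (\<lambda>i::'k::finite. axis i (1::real))"
  by (rule injI) (simp add: axis_eq_axis)

lemma sum_labels: "(\<Sum>y\<in>labels. g y) = (\<Sum>i\<in>UNIV. g (axis i (1::real)) :: real)"
  unfolding labels_def by (subst sum.reindex[OF inj_axis]) simp

lemma finite_labels: "finite (labels :: (real^'k) set)"
  by (simp add: labels_def)

lemma axis_in_labels: "axis i 1 \<in> labels" by (simp add: labels_def)

lemma sum_axis: "(\<Sum>i\<in>UNIV. c i * axis j (1::real) $ i) = (c j :: real)" for j :: "'k::finite"
proof -
  have "(\<Sum>i\<in>UNIV. c i * axis j (1::real) $ i) = (\<Sum>i\<in>UNIV. if i = j then c i else 0)"
    by (rule sum.cong) (auto simp: axis_def)
  then show ?thesis by simp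
qed

context cp
begin

lemma kern_H:
  assumes h: "randomized_classifier m h" and a: "a \<in> {1..m}"
  shows "kern (X_law \<mu> a) (Hk h a)"
  unfolding kern_def
proof (intro conjI allI)
  fix i x
  have hh: "\<forall>a\<in>{1..m}. \<forall>y\<in>labels. (\<lambda>x. h x a y) \<in> borel_measurable borel"
    "\<forall>x. \<forall>a\<in>{1..m}. \<forall>y\<in>labels. h x a y \<ge> 0"
    "\<forall>x. \<forall>a\<in>{1..m}. (\<Sum>y\<in>labels. h x a y) = 1"
    using h by (simp_all add: randomized_classifier_def)
  show "(\<lambda>x. Hk h a x i) \<in> borel_measurable (X_law \<mu> a)"
    unfolding PX_meas Hk_def using hh(1) a axis_in_labels by blast
  show "0 \<le> Hk h a x i" unfolding Hk_def using hh(2) a axis_in_labels by blast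
  show "(\<Sum>i\<in>UNIV. Hk h a x i) = 1" unfolding Hk_def using hh(3) a by (simp add: sum_labels)
qed

lemma marg_H:
  assumes h: "randomized_classifier m h" and a: "a \<in> {1..m}"
  shows "pred_prob \<mu> h a (axis i 1) = marg (X_law \<mu> a) (Hk h a) $ i"
proof -
  have m: "(\<lambda>x. h x a (axis i 1)) \<in> borel_measurable borel"
    using h a by (auto simp: randomized_classifier_def axis_in_labels)
  show ?thesis
    unfolding pred_prob_def marg_def Hk_def using PX_int[OF m, of a] by (simp add: case_prod_unfold)
qed

lemma Err_H:
  assumes h: "randomized_classifier m h" and a: "a \<in> {1..m}"
  shows "Err \<mu> h a = 1 - gain (X_law \<mu> a) (\<lambda>x. f x a) (Hk h a)"
proof -
  interpret C: prob_space "cond_measure \<mu> a" by (rule cond_prob[OF a])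
  have hm[measurable]: "(\<lambda>x. h x a (axis i 1)) \<in> borel_measurable borel" for i
    using h a by (auto simp: randomized_classifier_def axis_in_labels)
  have K: "kern (X_law \<mu> a) (Hk h a)" by (rule kern_H[OF h a])
  have h01: "0 \<le> h x a (axis i 1) \<and> h x a (axis i 1) \<le> 1" for x i
    using kern_le1[OF K, of x i] K unfolding kern_def Hk_def by blast
  have hsum: "(\<Sum>i\<in>UNIV. h x a (axis i 1)) = 1" for x
    using K unfolding kern_def Hk_def by blast
  define Q where "Q \<omega> = (\<Sum>i\<in>UNIV. h (fst \<omega>) a (axis i 1) * fst (snd \<omega>) $ i)" for \<omega> :: "'x \<times> (real^'k) \<times> nat"
  have Qm[measurable]: "Q \<in> borel_measurable \<mu>" unfolding Q_def by measurable
  have sam[measurable]: "(\<lambda>x. f x a) \<in> borel_measurable borel" by (rule sa_meas[OF a])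
  define R where "R x = (\<Sum>i\<in>UNIV. h x a (axis i 1) * f x a $ i)" for x
  have Rm[measurable]: "R \<in> borel_measurable borel" unfolding R_def by measurable
  have pt: "(case \<omega> of (x, y, _) \<Rightarrow> \<Sum>y'\<in>labels - {y}. h x a y') = 1 - Q \<omega>" if om: "\<omega> \<in> space \<mu>" for \<omega>
  proof -
    obtain j where j: "fst (snd \<omega>) = axis j 1" using Y_labels[OF om] labels_iff by blast
    have "(\<Sum>y'\<in>labels - {axis j 1}. h (fst \<omega>) a y') = (\<Sum>y'\<in>labels. h (fst \<omega>) a y') - h (fst \<omega>) a (axis j 1)"
      by (simp add: sum_diff1 finite_labels axis_in_labels)
    also have "\<dots> = 1 - h (fst \<omega>) a (axis j 1)" using hsum[of "fst \<omega>"] by (simp only: sum_labels)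
    also have "h (fst \<omega>) a (axis j 1) = Q \<omega>"
      unfolding Q_def j by (rule sum_axis[symmetric])
    finally show ?thesis using j by (simp add: case_prod_unfold)
  qed
  have Qb: "\<bar>Q \<omega>\<bar> \<le> 1" if om: "\<omega> \<in> space \<mu>" for \<omega>
  proof -
    obtain j where j: "fst (snd \<omega>) = axis j 1" using Y_labels[OF om] labels_iff by blast
    have "Q \<omega> = h (fst \<omega>) a (axis j 1)"
      unfolding Q_def j by (rule sum_axis)
    then show ?thesis using h01[of "fst \<omega>" j] by simp
  qed
  have QCint: "integrable (cond_measure \<mu> a) Q"
    by (rule C.integrable_const_bound[where B=1]) (use Qb in \<open>auto simp: cond_measure_def\<close>)
  have "Err \<mu> h a = integral\<^sup>L (cond_measure \<mu> a) (\<lambda>\<omega>. 1 - Q \<omega>)"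
    unfolding Err_def by (rule Bochner_Integration.integral_cong) (auto simp: pt cond_measure_def)
  also have "\<dots> = 1 - integral\<^sup>L (cond_measure \<mu> a) Q"
    using QCint by (simp add: C.prob_space)
  also have "integral\<^sup>L (cond_measure \<mu> a) Q = (\<integral>\<omega>. (if snd (snd \<omega>) = a then 1 else 0) * Q \<omega> \<partial>\<mu>) / pa a"
    by (rule cond_int[OF a Qm])
  also have "(\<integral>\<omega>. (if snd (snd \<omega>) = a then 1 else 0) * Q \<omega> \<partial>\<mu>) = (\<integral>\<omega>. (if snd (snd \<omega>) = a then 1 else 0) * R (fst \<omega>) \<partial>\<mu>)"
  proof -
    define g where "g i = (\<lambda>(x, c). (if c = a then 1 else 0) * h x a (axis i 1))" for i
    have gm[measurable]: "g i \<in> borel_measurable (XA m)" for i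
    proof -
      have "g i = (\<lambda>z. (if snd z = a then 1 else 0) * h (fst z) a (axis i 1))" by (auto simp: g_def)
      also have "\<dots> \<in> borel_measurable (XA m)"
      proof (intro borel_measurable_times)
        show "(\<lambda>z. h (fst z) a (axis i 1)) \<in> borel_measurable (XA m)"
          using measurable_compose[OF measurable_fst hm] by simp
        have "(\<lambda>z. if snd z = a then 1 else 0 :: real) = (\<lambda>c. if c = a then 1 else 0) \<circ> snd" by auto
        also have "\<dots> \<in> borel_measurable (XA m)" by (rule measurable_comp[OF measurable_snd]) simp
        finally show "(\<lambda>z. if snd z = a then 1 else 0 :: real) \<in> borel_measurable (XA m)" .
      qed
      finally show ?thesis .
    qed
    have gb: "\<bar>g i z\<bar> \<le> 1" for i z
      using h01[of "fst z" i] by (cases z) (simp add: g_def)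
    have gm2[measurable]: "(\<lambda>\<omega>. g i (fst \<omega>, snd (snd \<omega>))) \<in> borel_measurable \<mu>" for i
      using measurable_compose[OF pi_meas gm] by simp
    have "(\<integral>\<omega>. (if snd (snd \<omega>) = a then 1 else 0) * Q \<omega> \<partial>\<mu>)
       = (\<integral>\<omega>. (\<Sum>i\<in>UNIV. g i (fst \<omega>, snd (snd \<omega>)) * fst (snd \<omega>) $ i) \<partial>\<mu>)"
      by (rule Bochner_Integration.integral_cong) (auto simp: Q_def g_def sum_distrib_left)
    also have "\<dots> = (\<Sum>i\<in>UNIV. \<integral>\<omega>. g i (fst \<omega>, snd (snd \<omega>)) * fst (snd \<omega>) $ i \<partial>\<mu>)"
    proof (rule Bochner_Integration.integral_sum)
      fix i show "integrable \<mu> (\<lambda>\<omega>. g i (fst \<omega>, snd (snd \<omega>)) * fst (snd \<omega>) $ i)"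
      proof (rule int_bdd[where B=1])
        fix \<omega> assume "\<omega> \<in> space \<mu>"
        then have "\<bar>fst (snd \<omega>) $ i\<bar> \<le> 1" using Yi_bound[of \<omega> i] by simp
        then show "\<bar>g i (fst \<omega>, snd (snd \<omega>)) * fst (snd \<omega>) $ i\<bar> \<le> 1"
          using gb[of i "(fst \<omega>, snd (snd \<omega>))"] by (simp add: abs_mult mult_le_one)
      qed measurable
    qed
    also have "\<dots> = (\<Sum>i\<in>UNIV. \<integral>\<omega>. g i (fst \<omega>, snd (snd \<omega>)) * f (fst \<omega>) (snd (snd \<omega>)) $ i \<partial>\<mu>)"
      by (simp only: bayes_fun[OF gm])
    also have "\<dots> = (\<integral>\<omega>. (\<Sum>i\<in>UNIV. g i (fst \<omega>, snd (snd \<omega>)) * f (fst \<omega>) (snd (snd \<omega>)) $ i) \<partial>\<mu>)"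
    proof (rule Bochner_Integration.integral_sum[symmetric])
      fix i show "integrable \<mu> (\<lambda>\<omega>. g i (fst \<omega>, snd (snd \<omega>)) * f (fst \<omega>) (snd (snd \<omega>)) $ i)"
        by (rule Gi_int) (use gb in auto)
    qed
    also have "\<dots> = (\<integral>\<omega>. (if snd (snd \<omega>) = a then 1 else 0) * R (fst \<omega>) \<partial>\<mu>)"
      by (rule Bochner_Integration.integral_cong) (auto simp: R_def g_def sum_distrib_left)
    finally show ?thesis .
  qed
  also have "\<dots> / pa a = integral\<^sup>L (cond_measure \<mu> a) (\<lambda>\<omega>. R (fst \<omega>))"
    by (rule cond_int[OF a, symmetric]) measurable
  also have "\<dots> = integral\<^sup>L (X_law \<mu> a) R"
    by (rule PX_int[symmetric]) measurable
  also have "\<dots> = gain (X_law \<mu> a) (\<lambda>x. f x a) (Hk h a)"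
    by (simp add: gain_def R_def[abs_def] Hk_def)
  finally show ?thesis .
qed

end


definition qv :: "(real^'k) measure \<Rightarrow> real^'k" where
  "qv q = (\<chi> i. measure q {axis i 1})"

definition Qm :: "real^'k \<Rightarrow> (real^'k) measure" where
  "Qm v = distr (density (count_space UNIV) (\<lambda>i. ennreal (v$i))) borel (\<lambda>i. axis i 1)"

lemma labels_borel: "labels \<in> sets (borel :: (real^'k) measure)"
  by (simp add: finite_labels finite_imp_closed borel_closed)

lemma emeasure_Qm:
  assumes v: "v \<in> sx" and B: "B \<in> sets borel"
  shows "emeasure (Qm v) B = ennreal (\<Sum>i\<in>UNIV. indicator B (axis i 1) * v$i)"
proof -
  have "emeasure (Qm v) B = emeasure (density (count_space UNIV) (\<lambda>i. ennreal (v$i))) ((\<lambda>i. axis i 1) -` B)"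
    unfolding Qm_def using B by (subst emeasure_distr) auto
  also have "\<dots> = (\<integral>\<^sup>+ i. ennreal (v$i) * indicator ((\<lambda>i. axis i 1) -` B) i \<partial>count_space UNIV)"
    by (subst emeasure_density) auto
  also have "\<dots> = (\<Sum>i\<in>UNIV. ennreal (v$i) * indicator ((\<lambda>i. axis i 1) -` B) i)"
    by (subst nn_integral_count_space_finite) auto
  also have "\<dots> = (\<Sum>i\<in>UNIV. ennreal (indicator B (axis i 1) * v$i))"
    by (intro sum.cong refl) (auto simp: indicator_def)
  also have "\<dots> = ennreal (\<Sum>i\<in>UNIV. indicator B (axis i 1) * v$i)"
    using v by (intro sum_ennreal) (auto simp: sx_def)
  finally show ?thesis .
qed

lemma Qm_Qk: assumes v: "v \<in> sx" shows "Qm v \<in> Qk"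
proof -
  have sets: "sets (Qm v) = sets borel" by (simp add: Qm_def)
  have sp: "space (Qm v) = UNIV" by (simp add: Qm_def)
  have all: "emeasure (Qm v) UNIV = 1"
    using emeasure_Qm[OF v, of UNIV] v by (simp add: sx_def)
  then have P: "prob_space (Qm v)" by (intro prob_spaceI) (simp add: sp)
  have "emeasure (Qm v) labels = 1"
    using emeasure_Qm[OF v labels_borel] v by (simp add: sx_def axis_in_labels)
  then have "measure (Qm v) labels = 1" by (simp add: measure_def)
  then show ?thesis using sets P by (simp add: Qk_def)
qed

lemma qv_Qm: assumes v: "v \<in> sx" shows "qv (Qm v) = v"
proof -
  have "measure (Qm v) {axis i 1} = v$i" for i
  proof -
    have "emeasure (Qm v) {axis i 1} = ennreal (\<Sum>j\<in>UNIV. indicator {axis i (1::real)} (axis j (1::real)) * v$j)"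
      using emeasure_Qm[OF v, of "{axis i 1}"] by simp
    also have "(\<Sum>j\<in>UNIV. indicator {axis i 1} (axis j (1::real)) * v$j) = (\<Sum>j\<in>UNIV. if j = i then v$j else 0)"
      by (intro sum.cong refl) (auto simp: indicator_def axis_eq_axis)
    also have "\<dots> = v$i" by simp
    finally show ?thesis using v by (simp add: measure_def sx_def)
  qed
  then show ?thesis by (simp add: qv_def vec_eq_iff)
qed

lemma Qk_eq_Qm:
  assumes q: "q \<in> Qk"
  shows "qv q \<in> sx" "q = Qm (qv q)"
proof -
  have sets: "sets q = sets borel" and P: "prob_space q" and L: "measure q labels = 1"
    using q by (auto simp: Qk_def)
  interpret q: prob_space q by (rule P)
  have spq: "space q = UNIV" using sets_eq_imp_space_eq[OF sets] by simp
  have sing: "{y} \<in> sets q" for y by (simp add: sets)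
  have sumL: "measure q (S \<inter> labels) = (\<Sum>i\<in>UNIV. indicator S (axis i 1) * measure q {axis i 1})" for S
  proof -
    have "measure q (S \<inter> labels) = (\<Sum>y\<in>S \<inter> labels. measure q {y})"
      by (rule q.finite_measure_eq_sum_singleton) (auto simp: finite_labels sing)
    also have "\<dots> = (\<Sum>y\<in>{y\<in>labels. y \<in> S}. measure q {y})"
      by (rule sum.cong) auto
    also have "\<dots> = (\<Sum>y\<in>labels. if y \<in> S then measure q {y} else 0)"
      by (rule sum.inter_filter[OF finite_labels])
    also have "\<dots> = (\<Sum>y\<in>labels. indicator S y * measure q {y})"
      by (rule sum.cong) (auto simp: indicator_def)
    also have "\<dots> = (\<Sum>i\<in>UNIV. indicator S (axis i 1) * measure q {axis i 1})"
      by (rule sum_labels)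
    finally show ?thesis .
  qed
  have "(\<Sum>i\<in>UNIV. measure q {axis i 1}) = 1" using sumL[of UNIV] L by simp
  then show v: "qv q \<in> sx" by (simp add: sx_def qv_def)
  show "q = Qm (qv q)"
  proof (rule measure_eqI)
    show "sets q = sets (Qm (qv q))" by (simp add: sets Qm_def)
    fix B assume "B \<in> sets q"
    then have B: "B \<in> sets borel" by (simp add: sets)
    have Lc: "measure q (B - labels) = 0"
    proof -
      have "measure q (B - labels) \<le> measure q (space q - labels)"
        using B labels_borel by (intro q.finite_measure_mono) (auto simp: sets spq)
      also have "\<dots> = 0" using q.prob_compl[of labels] labels_borel L by (simp add: sets)
      finally show ?thesis using measure_nonneg[of q "B - labels"] by linarith
    qed
    have "measure q B = measure q (B \<inter> labels) + measure q (B - labels)"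
    proof -
      have "measure q ((B \<inter> labels) \<union> (B - labels)) = measure q (B \<inter> labels) + measure q (B - labels)"
        by (rule q.finite_measure_Union) (use B labels_borel in \<open>auto simp: sets\<close>)
      moreover have "(B \<inter> labels) \<union> (B - labels) = B" by blast
      ultimately show ?thesis by simp
    qed
    then have "measure q B = (\<Sum>i\<in>UNIV. indicator B (axis i 1) * qv q $ i)"
      using Lc sumL[of B] by (simp add: qv_def)
    then show "emeasure q B = emeasure (Qm (qv q)) B"
      using emeasure_Qm[OF v B] by (simp add: q.emeasure_eq_measure)
  qed
qed


lemma fst_borel[measurable]: "fst \<in> borel_measurable (borel :: ('a::second_countable_topology \<times> 'b::second_countable_topology) measure)"
  by (rule borel_measurable_continuous_onI) (intro continuous_intros)

lemma snd_borel[measurable]: "snd \<in> borel_measurable (borel :: ('a::second_countable_topology \<times> 'b::second_countable_topology) measure)"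
  by (rule borel_measurable_continuous_onI) (intro continuous_intros)

lemma l1_meas[measurable]: "(\<lambda>z. l1dist (fst z) (snd z)) \<in> borel_measurable (borel :: ((real^'k) \<times> (real^'k)) measure)"
  unfolding l1dist_def by measurable

lemma mx_meas_borel[measurable]: "mx \<psi> \<in> borel_measurable borel"
  unfolding mx_def by measurable

lemma labels_iff2: "y \<in> labels \<longleftrightarrow> (\<exists>j. y = axis j 1)"
  by (auto simp: labels_def)

lemma sx_borel: "sx \<in> sets borel"
  by (rule borel_closed[OF compact_imp_closed[OF compact_sx]])

lemma sum_axis1: "(\<Sum>i\<in>UNIV. axis j (1::real) $ i) = 1" for j :: "'k::finite"
  using sum_axis[of "\<lambda>_. 1" j] by simp

lemma inner_axis1: "inner \<psi> (axis j (1::real)) = \<psi> $ j"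
  by (simp add: inner_vec_def sum_axis)

lemma l1dist_axis:
  assumes t: "t \<in> sx"
  shows "l1dist t (axis j 1) = 2 - 2 * t$j"
proof -
  have "\<bar>t$i - axis j 1 $ i\<bar> = t$i + axis j 1 $ i - 2 * (t$i * axis j 1 $ i)" for i
    using t sx_le1[OF t, of i] by (auto simp: axis_def sx_def)
  then have "l1dist t (axis j 1) = (\<Sum>i\<in>UNIV. t$i + axis j 1 $ i - 2 * (t$i * axis j 1 $ i))"
    by (simp add: l1dist_def)
  also have "\<dots> = (\<Sum>i\<in>UNIV. t$i) + (\<Sum>i\<in>UNIV. axis j 1 $ i) - 2 * (\<Sum>i\<in>UNIV. t$i * axis j 1 $ i)"
    by (simp add: sum.distrib sum_subtractf sum_distrib_left)
  also have "\<dots> = 2 - 2 * t$j" using t by (simp add: sx_def sum_axis sum_axis1)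
  finally show ?thesis .
qed

context semi
begin

lemma coupling_lower:
  assumes v: "v \<in> sx" and \<gamma>: "\<gamma> \<in> couplings (distr P borel s) (Qm v)"
  shows "2 - 2 * Dual P s v \<psi> \<le> transport_cost \<gamma>"
proof -
  have sg: "sets \<gamma> = sets borel" and Pg: "prob_space \<gamma>"
    and m1: "distr \<gamma> borel fst = distr P borel s" and m2: "distr \<gamma> borel snd = Qm v"
    using \<gamma> by (auto simp: couplings_def)
  interpret G: prob_space \<gamma> by (rule Pg)
  have mg: "measurable \<gamma> N = measurable borel N" for N by (rule measurable_cong_sets[OF sg refl])
  have [measurable]: "fst \<in> borel_measurable \<gamma>" "snd \<in> borel_measurable \<gamma>" by (simp_all add: mg)
  have [measurable]: "(\<lambda>z. l1dist (fst z) (snd z)) \<in> borel_measurable \<gamma>" by (simp add: mg)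
  have [measurable]: "(\<lambda>z. mx \<psi> (fst z)) \<in> borel_measurable \<gamma>" by measurable
  have [measurable]: "(\<lambda>z. inner \<psi> (snd z)) \<in> borel_measurable \<gamma>" by measurable
  have AE1: "AE z in \<gamma>. fst z \<in> sx"
  proof -
    have "AE x in distr P borel s. x \<in> sx" by (subst AE_distr_iff) (use s_ae sx_borel in auto)
    then have "AE x in distr \<gamma> borel fst. x \<in> sx" unfolding m1 .
    then show ?thesis by (subst (asm) AE_distr_iff) (use sx_borel in auto)
  qed
  have AE2: "AE z in \<gamma>. snd z \<in> labels"
  proof -
    have "AE x in Qm v. x \<in> labels" unfolding Qm_def by (subst AE_distr_iff) (auto simp: axis_in_labels labels_borel)
    then have "AE x in distr \<gamma> borel snd. x \<in> labels" unfolding m2 .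
    then show ?thesis by (subst (asm) AE_distr_iff) (use labels_borel in auto)
  qed
  define B where "B = (\<Sum>i\<in>UNIV. \<bar>\<psi>$i\<bar>)"
  have Bj: "\<bar>\<psi>$j\<bar> \<le> B" for j unfolding B_def by (rule member_le_sum) auto
  have i1: "integrable \<gamma> (\<lambda>z. l1dist (fst z) (snd z))"
  proof (rule G.integrable_const_bound[where B=2])
    show "AE z in \<gamma>. norm (l1dist (fst z) (snd z)) \<le> 2"
      using AE1 AE2
    proof eventually_elim
      case (elim z)
      then obtain j where j: "snd z = axis j 1" by (auto simp: labels_iff2)
      have "0 \<le> fst z $ j" "fst z $ j \<le> 1" using elim(1) sx_le1[OF elim(1), of j] by (auto simp: sx_def)
      then show ?case using l1dist_axis[OF elim(1), of j] j by simp
    qed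
  qed measurable
  have i2: "integrable \<gamma> (\<lambda>z. mx \<psi> (fst z))"
    by (rule G.integrable_const_bound[where B="1 + B"]) (use AE1 mx_bound in \<open>measurable, auto elim!: AE_mp simp: B_def\<close>)
  have i3: "integrable \<gamma> (\<lambda>z. inner \<psi> (snd z))"
    by (rule G.integrable_const_bound[where B=B]) (use AE2 Bj in \<open>measurable, auto elim!: AE_mp simp: labels_iff2 inner_axis1\<close>)
  have "(\<integral>z. 2 - 2 * (mx \<psi> (fst z) + inner \<psi> (snd z)) \<partial>\<gamma>) \<le> (\<integral>z. l1dist (fst z) (snd z) \<partial>\<gamma>)"
  proof (rule integral_mono_AE)
    show "integrable \<gamma> (\<lambda>z. 2 - 2 * (mx \<psi> (fst z) + inner \<psi> (snd z)))" using i2 i3 by auto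
    show "integrable \<gamma> (\<lambda>z. l1dist (fst z) (snd z))" by (rule i1)
    show "AE z in \<gamma>. 2 - 2 * (mx \<psi> (fst z) + inner \<psi> (snd z)) \<le> l1dist (fst z) (snd z)"
      using AE1 AE2
    proof eventually_elim
      case (elim z)
      then obtain j where j: "snd z = axis j 1" by (auto simp: labels_iff2)
      have "fst z $ j - \<psi>$j \<le> mx \<psi> (fst z)" unfolding mx_def by auto
      then show ?case using l1dist_axis[OF elim(1), of j] j by (simp add: inner_axis1)
    qed
  qed
  also have "(\<integral>z. l1dist (fst z) (snd z) \<partial>\<gamma>) = transport_cost \<gamma>"
    by (simp add: transport_cost_def case_prod_unfold)
  finally have 1: "(\<integral>z. 2 - 2 * (mx \<psi> (fst z) + inner \<psi> (snd z)) \<partial>\<gamma>) \<le> transport_cost \<gamma>" .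
  have "(\<integral>z. 2 - 2 * (mx \<psi> (fst z) + inner \<psi> (snd z)) \<partial>\<gamma>) = 2 - 2 * ((\<integral>z. mx \<psi> (fst z) \<partial>\<gamma>) + (\<integral>z. inner \<psi> (snd z) \<partial>\<gamma>))"
    using i2 i3 by (simp add: G.prob_space)
  also have "(\<integral>z. mx \<psi> (fst z) \<partial>\<gamma>) = (\<integral>x. mx \<psi> (s x) \<partial>P)"
  proof -
    have "(\<integral>z. mx \<psi> (fst z) \<partial>\<gamma>) = integral\<^sup>L (distr \<gamma> borel fst) (mx \<psi>)" by (rule integral_distr[symmetric]) measurable
    also have "\<dots> = integral\<^sup>L (distr P borel s) (mx \<psi>)" by (simp only: m1)
    also have "\<dots> = (\<integral>x. mx \<psi> (s x) \<partial>P)" by (rule integral_distr) measurable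
    finally show ?thesis .
  qed
  also have "(\<integral>z. inner \<psi> (snd z) \<partial>\<gamma>) = inner v \<psi>"
  proof -
    have "(\<integral>z. inner \<psi> (snd z) \<partial>\<gamma>) = integral\<^sup>L (distr \<gamma> borel snd) (inner \<psi>)" by (rule integral_distr[symmetric]) measurable
    also have "\<dots> = integral\<^sup>L (Qm v) (inner \<psi>)" by (simp only: m2)
    also have "\<dots> = (\<integral>i. inner \<psi> (axis i 1) \<partial>density (count_space UNIV) (\<lambda>i. ennreal (v$i)))"
      unfolding Qm_def by (rule integral_distr) measurable
    also have "\<dots> = (\<integral>i. v$i * inner \<psi> (axis i 1) \<partial>count_space UNIV)"
      by (subst integral_density) (use v in \<open>auto simp: sx_def\<close>)
    also have "\<dots> = inner v \<psi>"
      by (simp only: lebesgue_integral_count_space_finite[OF finite] inner_axis1) (simp add: inner_vec_def mult.commute)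
    finally show ?thesis .
  qed
  finally show ?thesis using 1 by (simp add: Dual_def)
qed

end


context semi
begin

lemma coupling_constr:
  fixes H :: "'x \<Rightarrow> 'k \<Rightarrow> real"
  assumes H: "kern P H"
  shows "\<exists>\<gamma>\<in>couplings (distr P borel s) (Qm (marg P H)). transport_cost \<gamma> = 2 - 2 * gain P s H"
proof -
  define v where "v = marg P H"
  have v: "v \<in> sx" unfolding v_def by (rule marg_sx[OF H])
  have Hm[measurable]: "(\<lambda>x. H x i) \<in> borel_measurable P" for i using H by (simp add: kern_def)
  have H0: "0 \<le> H x i" for x i using H by (simp add: kern_def)
  have Hs: "(\<Sum>i\<in>UNIV. H x i) = 1" for x using H by (simp add: kern_def)
  have Hse: "(\<Sum>i\<in>UNIV. ennreal (H x i)) = 1" for x using Hs[of x] H0 by (simp add: sum_ennreal)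
  define CP where "CP = count_space (UNIV::'k set) \<Otimes>\<^sub>M P"
  have Hpm[measurable]: "(\<lambda>z. H (snd z) (fst z)) \<in> borel_measurable CP"
    unfolding CP_def by (rule measurable_pair_measure_countable1) auto
  define \<phi> where "\<phi> = (\<lambda>z::'k \<times> 'x. (s (snd z), axis (fst z) (1::real)))"
  have \<phi>m[measurable]: "\<phi> \<in> measurable CP borel"
  proof -
    have a: "(\<lambda>z. s (snd z)) \<in> borel_measurable CP" unfolding CP_def by measurable
    have b: "(\<lambda>z. axis (fst z) (1::real)) \<in> borel_measurable CP"
      unfolding CP_def by (rule measurable_compose[OF measurable_fst]) simp
    show ?thesis unfolding \<phi>_def using borel_measurable_Pair[OF a b] .
  qed
  define K where "K = density CP (\<lambda>z. ennreal (H (snd z) (fst z)))"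
  define \<gamma> where "\<gamma> = distr K borel \<phi>"
  have sg: "sets \<gamma> = sets borel" and spg: "space \<gamma> = UNIV" by (simp_all add: \<gamma>_def)
  have mg: "measurable \<gamma> N = measurable borel N" for N by (rule measurable_cong_sets[OF sg refl])
  have nn\<gamma>: "(\<integral>\<^sup>+z. g z \<partial>\<gamma>) = (\<integral>\<^sup>+x. (\<Sum>i\<in>UNIV. ennreal (H x i) * g (s x, axis i 1)) \<partial>P)"
    if g[measurable]: "g \<in> borel_measurable borel" for g :: "(real^'k) \<times> (real^'k) \<Rightarrow> ennreal"
  proof -
    have "(\<integral>\<^sup>+z. g z \<partial>\<gamma>) = (\<integral>\<^sup>+z. g (\<phi> z) \<partial>K)"
      unfolding \<gamma>_def by (rule nn_integral_distr) (auto simp: K_def)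
    also have "\<dots> = (\<integral>\<^sup>+z. ennreal (H (snd z) (fst z)) * g (\<phi> z) \<partial>CP)"
      unfolding K_def by (rule nn_integral_density) measurable
    also have "\<dots> = (\<integral>\<^sup>+i. \<integral>\<^sup>+x. ennreal (H x i) * g (s x, axis i 1) \<partial>P \<partial>count_space UNIV)"
    proof -
      have F: "(\<lambda>z. ennreal (H (snd z) (fst z)) * g (\<phi> z)) \<in> borel_measurable (count_space UNIV \<Otimes>\<^sub>M P)"
        using \<phi>m Hpm unfolding CP_def by measurable
      have "(\<integral>\<^sup>+i. \<integral>\<^sup>+x. (\<lambda>z. ennreal (H (snd z) (fst z)) * g (\<phi> z)) (i, x) \<partial>P \<partial>count_space UNIV)
           = integral\<^sup>N (count_space UNIV \<Otimes>\<^sub>M P) (\<lambda>z. ennreal (H (snd z) (fst z)) * g (\<phi> z))"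
        by (rule nn_integral_fst[OF F])
      then show ?thesis by (simp add: CP_def \<phi>_def)
    qed
    also have "\<dots> = (\<Sum>i\<in>UNIV. \<integral>\<^sup>+x. ennreal (H x i) * g (s x, axis i 1) \<partial>P)"
      by (rule nn_integral_count_space_finite) simp
    also have "\<dots> = (\<integral>\<^sup>+x. (\<Sum>i\<in>UNIV. ennreal (H x i) * g (s x, axis i 1)) \<partial>P)"
      by (rule nn_integral_sum[symmetric]) measurable
    finally show ?thesis .
  qed
  have ind_g: "emeasure \<gamma> A = (\<integral>\<^sup>+x. (\<Sum>i\<in>UNIV. ennreal (H x i) * indicator A (s x, axis i 1)) \<partial>P)"
    if A: "A \<in> sets borel" for A :: "((real^'k) \<times> (real^'k)) set"
  proof -
    have "emeasure \<gamma> A = (\<integral>\<^sup>+z. indicator A z \<partial>\<gamma>)" using A by (simp add: sg)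
    also have "\<dots> = (\<integral>\<^sup>+x. (\<Sum>i\<in>UNIV. ennreal (H x i) * indicator A (s x, axis i 1)) \<partial>P)"
      by (rule nn\<gamma>) (use A in measurable)
    finally show ?thesis .
  qed
  have prob: "prob_space \<gamma>"
  proof (rule prob_spaceI)
    have "emeasure \<gamma> UNIV = (\<integral>\<^sup>+x. (\<Sum>i\<in>UNIV. ennreal (H x i)) \<partial>P)"
      using ind_g[of UNIV] by simp
    also have "\<dots> = (\<integral>\<^sup>+x. 1 \<partial>P)" by (simp add: Hse)
    also have "\<dots> = 1" by (simp add: emeasure_space_1)
    finally show "emeasure \<gamma> (space \<gamma>) = 1" by (simp add: spg)
  qed
  have m1: "distr \<gamma> borel fst = distr P borel s"
  proof (rule measure_eqI)
    show "sets (distr \<gamma> borel fst) = sets (distr P borel s)" by simp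
    fix B assume "B \<in> sets (distr \<gamma> borel fst)"
    then have B[measurable]: "B \<in> sets borel" by simp
    have "emeasure (distr \<gamma> borel fst) B = emeasure \<gamma> (fst -` B)"
      by (subst emeasure_distr) (auto simp: mg spg)
    also have "\<dots> = (\<integral>\<^sup>+x. (\<Sum>i\<in>UNIV. ennreal (H x i) * indicator (fst -` B) (s x, axis i (1::real))) \<partial>P)"
      by (rule ind_g) (use measurable_sets[OF fst_borel B] in simp)
    also have "\<dots> = (\<integral>\<^sup>+x. indicator B (s x) \<partial>P)"
      by (rule nn_integral_cong) (simp add: indicator_def sum_distrib_right[symmetric] Hse)
    also have "\<dots> = (\<integral>\<^sup>+x. indicator (s -` B \<inter> space P) x \<partial>P)"
      by (rule nn_integral_cong) (simp add: indicator_def)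
    also have "\<dots> = emeasure P (s -` B \<inter> space P)"
      by (rule nn_integral_indicator) (use measurable_sets[OF s_meas B] in simp)
    also have "\<dots> = emeasure (distr P borel s) B"
      by (rule emeasure_distr[symmetric]) auto
    finally show "emeasure (distr \<gamma> borel fst) B = emeasure (distr P borel s) B" .
  qed
  have intH: "(\<integral>\<^sup>+x. ennreal (H x i) \<partial>P) = ennreal (v$i)" for i
    unfolding v_def marg_def using kern_int(1)[OF H, of i] H0 by (simp add: nn_integral_eq_integral)
  have m2: "distr \<gamma> borel snd = Qm v"
  proof (rule measure_eqI)
    show "sets (distr \<gamma> borel snd) = sets (Qm v)" by (simp add: Qm_def)
    fix B assume "B \<in> sets (distr \<gamma> borel snd)"
    then have B[measurable]: "B \<in> sets borel" by simp
    have "emeasure (distr \<gamma> borel snd) B = emeasure \<gamma> (snd -` B)"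
      by (subst emeasure_distr) (auto simp: mg spg)
    also have "\<dots> = (\<integral>\<^sup>+x. (\<Sum>i\<in>UNIV. ennreal (H x i) * indicator (snd -` B) (s x, axis i (1::real))) \<partial>P)"
      by (rule ind_g) (use measurable_sets[OF snd_borel B] in simp)
    also have "\<dots> = (\<Sum>i\<in>UNIV. (\<integral>\<^sup>+x. ennreal (H x i) \<partial>P) * indicator B (axis i 1))"
      by (subst nn_integral_sum) (auto simp: indicator_def nn_integral_multc)
    also have "\<dots> = (\<Sum>i\<in>UNIV. ennreal (indicator B (axis i 1) * v$i))"
      using v by (intro sum.cong refl) (auto simp: intH indicator_def)
    also have "\<dots> = ennreal (\<Sum>i\<in>UNIV. indicator B (axis i 1) * v$i)"
      using v by (intro sum_ennreal) (auto simp: sx_def)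
    also have "\<dots> = emeasure (Qm v) B" by (rule emeasure_Qm[OF v B, symmetric])
    finally show "emeasure (distr \<gamma> borel snd) B = emeasure (Qm v) B" .
  qed
  have coup: "\<gamma> \<in> couplings (distr P borel s) (Qm v)"
    using prob m1 m2 by (simp add: couplings_def sg)
  define gi where "gi x = (\<Sum>i\<in>UNIV. H x i * s x $ i)" for x
  have gim[measurable]: "gi \<in> borel_measurable P" unfolding gi_def by measurable
  have giint: "integrable P gi" unfolding gi_def by (intro Bochner_Integration.integrable_sum kern_int(2)[OF H])
  have gi01: "AE x in P. 0 \<le> gi x \<and> gi x \<le> 1"
    using s_ae
  proof eventually_elim
    case (elim x)
    have "gi x \<le> (\<Sum>i\<in>UNIV. H x i * 1)" unfolding gi_def
      using elim sx_le1[OF elim] H0 by (intro sum_mono mult_left_mono) auto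
    moreover have "0 \<le> gi x" unfolding gi_def using elim H0 by (intro sum_nonneg) (auto simp: sx_def)
    ultimately show ?case using Hs[of x] by simp
  qed
  have "transport_cost \<gamma> = enn2real (\<integral>\<^sup>+z. ennreal (l1dist (fst z) (snd z)) \<partial>\<gamma>)"
    unfolding transport_cost_def case_prod_unfold
    by (rule integral_eq_nn_integral) (auto simp: mg l1dist_def)
  also have "(\<integral>\<^sup>+z. ennreal (l1dist (fst z) (snd z)) \<partial>\<gamma>)
     = (\<integral>\<^sup>+x. (\<Sum>i\<in>UNIV. ennreal (H x i) * ennreal (l1dist (s x) (axis i 1))) \<partial>P)"
    using nn\<gamma>[of "\<lambda>z. ennreal (l1dist (fst z) (snd z))"] by simp
  also have "\<dots> = (\<integral>\<^sup>+x. ennreal (2 - 2 * gi x) \<partial>P)"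
  proof (rule nn_integral_cong_AE)
    show "AE x in P. (\<Sum>i\<in>UNIV. ennreal (H x i) * ennreal (l1dist (s x) (axis i 1))) = ennreal (2 - 2 * gi x)"
      using s_ae
    proof eventually_elim
      case (elim x)
      have "(\<Sum>i\<in>UNIV. ennreal (H x i) * ennreal (l1dist (s x) (axis i 1)))
          = (\<Sum>i\<in>UNIV. ennreal (H x i * (2 - 2 * s x $ i)))"
        using elim H0 sx_le1[OF elim] by (intro sum.cong refl) (auto simp: l1dist_axis ennreal_mult)
      also have "\<dots> = ennreal (\<Sum>i\<in>UNIV. H x i * (2 - 2 * s x $ i))"
        using H0 sx_le1[OF elim] by (intro sum_ennreal) auto
      also have "(\<Sum>i\<in>UNIV. H x i * (2 - 2 * s x $ i)) = 2 * (\<Sum>i\<in>UNIV. H x i) - 2 * gi x"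
        by (simp add: gi_def algebra_simps sum_subtractf sum_distrib_left)
      finally show ?case using Hs[of x] by simp
    qed
  qed
  also have "\<dots> = ennreal (\<integral>x. 2 - 2 * gi x \<partial>P)"
    by (rule nn_integral_eq_integral) (use giint gi01 in \<open>auto elim!: AE_mp\<close>)
  also have "enn2real \<dots> = (\<integral>x. 2 - 2 * gi x \<partial>P)"
    by (rule enn2real_ennreal) (rule integral_nonneg_AE, use gi01 in \<open>auto elim!: AE_mp\<close>)
  also have "\<dots> = 2 - 2 * gain P s H"
    using giint by (simp add: gain_def gi_def[abs_def] prob_space)
  finally show ?thesis using coup v_def by blast
qed

end


context cp
begin

lemma W1_val:
  assumes a: "a \<in> {1..m}" and q: "q \<in> Qk"
  shows "is_min (transport_cost ` couplings (distr (X_law \<mu> a) borel (\<lambda>x. f x a)) q)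
                (2 - 2 * optv (X_law \<mu> a) (\<lambda>x. f x a) (qv q))"
    and "W1 (distr (X_law \<mu> a) borel (\<lambda>x. f x a)) q = 2 - 2 * optv (X_law \<mu> a) (\<lambda>x. f x a) (qv q)"
proof -
  interpret S: semi "X_law \<mu> a" "\<lambda>x. f x a" by (rule semi_PX[OF a])
  have v: "qv q \<in> sx" and qe: "q = Qm (qv q)" using Qk_eq_Qm[OF q] by auto
  obtain \<psi> H where \<psi>: "optv (X_law \<mu> a) (\<lambda>x. f x a) (qv q) = Dual (X_law \<mu> a) (\<lambda>x. f x a) (qv q) \<psi>"
    and H: "kern (X_law \<mu> a) H" "marg (X_law \<mu> a) H = qv q" "gain (X_law \<mu> a) (\<lambda>x. f x a) H = optv (X_law \<mu> a) (\<lambda>x. f x a) (qv q)"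
    using S.optv_strong[OF v] by blast
  obtain \<gamma> where \<gamma>: "\<gamma> \<in> couplings (distr (X_law \<mu> a) borel (\<lambda>x. f x a)) (Qm (marg (X_law \<mu> a) H))"
    "transport_cost \<gamma> = 2 - 2 * gain (X_law \<mu> a) (\<lambda>x. f x a) H"
    using S.coupling_constr[OF H(1)] by blast
  have mem: "2 - 2 * optv (X_law \<mu> a) (\<lambda>x. f x a) (qv q) \<in> transport_cost ` couplings (distr (X_law \<mu> a) borel (\<lambda>x. f x a)) q"
    using \<gamma> H(2,3) qe by (metis image_eqI)
  have low: "2 - 2 * optv (X_law \<mu> a) (\<lambda>x. f x a) (qv q) \<le> c"
    if cin: "c \<in> transport_cost ` couplings (distr (X_law \<mu> a) borel (\<lambda>x. f x a)) q" for c
  proof -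
    obtain \<gamma>' where g1: "\<gamma>' \<in> couplings (distr (X_law \<mu> a) borel (\<lambda>x. f x a)) q" and "c = transport_cost \<gamma>'"
      using cin by blast
    moreover have "\<gamma>' \<in> couplings (distr (X_law \<mu> a) borel (\<lambda>x. f x a)) (Qm (qv q))" using g1 qe by simp
    ultimately show ?thesis using S.coupling_lower[OF v, of \<gamma>' \<psi>] \<psi> by simp
  qed
  show "is_min (transport_cost ` couplings (distr (X_law \<mu> a) borel (\<lambda>x. f x a)) q)
                (2 - 2 * optv (X_law \<mu> a) (\<lambda>x. f x a) (qv q))"
    using mem low by (simp add: is_min_def)
  show "W1 (distr (X_law \<mu> a) borel (\<lambda>x. f x a)) q = 2 - 2 * optv (X_law \<mu> a) (\<lambda>x. f x a) (qv q)"
    unfolding W1_def by (rule cInf_eq_minimum[OF mem low])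
qed

end

lemma is_min_unique: "is_min S a \<Longrightarrow> is_min S b \<Longrightarrow> a = b"
  by (auto simp: is_min_def intro: order.antisym)

lemma sum_one_minus: "(\<Sum>a\<in>{1..m}. 1 - x a) = real m - (\<Sum>a\<in>{1..m}. x a :: real)"
  by (simp add: sum_subtractf)

lemma sum_two_minus: "(\<Sum>a\<in>{1..m}. 2 - 2 * x a) = 2 * (real m - (\<Sum>a\<in>{1..m}. x a :: real))"
  by (simp add: sum_subtractf sum_distrib_left algebra_simps)

context cp
begin

definition Phi :: "real^'k \<Rightarrow> real" where
  "Phi q = (\<Sum>a\<in>{1..m}. optv (X_law \<mu> a) (\<lambda>x. f x a) q)"

lemma Phi_max: "\<exists>qs\<in>sx. \<forall>q\<in>sx. Phi q \<le> Phi qs"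
proof -
  have lip: "Phi q \<le> Phi q' + real m * (\<Sum>i\<in>UNIV. \<bar>q$i - q'$i\<bar>)" if q: "q \<in> sx" and q': "q' \<in> sx" for q q'
  proof -
    have "Phi q \<le> (\<Sum>a\<in>{1..m}. optv (X_law \<mu> a) (\<lambda>x. f x a) q' + (\<Sum>i\<in>UNIV. \<bar>q$i - q'$i\<bar>))"
      unfolding Phi_def
    proof (rule sum_mono)
      fix a assume a: "a \<in> {1..m}"
      interpret S: semi "X_law \<mu> a" "\<lambda>x. f x a" by (rule semi_PX[OF a])
      show "optv (X_law \<mu> a) (\<lambda>x. f x a) q \<le> optv (X_law \<mu> a) (\<lambda>x. f x a) q' + (\<Sum>i\<in>UNIV. \<bar>q$i - q'$i\<bar>)"
        by (rule S.optv_lip[OF q q'])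
    qed
    also have "\<dots> = Phi q' + real m * (\<Sum>i\<in>UNIV. \<bar>q$i - q'$i\<bar>)"
      by (simp add: Phi_def sum.distrib)
    finally show ?thesis .
  qed
  have "continuous_on sx Phi" by (rule cont_from_lip[OF lip]) auto
  then show ?thesis using continuous_attains_sup[OF compact_sx _ ] sx_ne by blast
qed

lemma main_cp:
  assumes m1: "m \<ge> 1"
  defines "r \<equiv> (\<lambda>a. distr (X_law \<mu> a) borel (\<lambda>x. f x a))"
  shows "\<exists>V.
     is_min {\<Sum>a\<in>{1..m}. Err \<mu> h a | h. randomized_classifier m h \<and> demographic_parity m \<mu> h} V \<and>
     is_min {\<Sum>a\<in>{1..m}. W1 (r a) q | q. q \<in> Qk} (2 * V) \<and>
     (\<forall>q\<in>Qk. \<forall>a\<in>{1..m}. is_min (transport_cost ` couplings (r a) q) (W1 (r a) q)) \<and>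
     is_min {\<Sum>a\<in>{1..m}. (THE c. is_min (transport_cost ` couplings (r a) q) c) | q. q \<in> Qk} (2 * V)"
proof -
  obtain qs where qs: "qs \<in> sx" "\<And>q. q \<in> sx \<Longrightarrow> Phi q \<le> Phi qs" using Phi_max by blast
  define V where "V = real m - Phi qs"
  have W1eq: "W1 (r a) q = 2 - 2 * optv (X_law \<mu> a) (\<lambda>x. f x a) (qv q)" if "a \<in> {1..m}" "q \<in> Qk" for a q
    unfolding r_def by (rule W1_val(2)[OF that])
  have W1min: "is_min (transport_cost ` couplings (r a) q) (W1 (r a) q)" if "a \<in> {1..m}" "q \<in> Qk" for a q
    unfolding r_def using W1_val[OF that] by simp
  have THEeq: "(THE c. is_min (transport_cost ` couplings (r a) q) c) = W1 (r a) q" if "a \<in> {1..m}" "q \<in> Qk" for a q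
    using W1min[OF that] is_min_unique by blast
  have W1sum: "(\<Sum>a\<in>{1..m}. W1 (r a) q) = 2 * (real m - Phi (qv q))" if q: "q \<in> Qk" for q
  proof -
    have "(\<Sum>a\<in>{1..m}. W1 (r a) q) = (\<Sum>a\<in>{1..m}. 2 - 2 * optv (X_law \<mu> a) (\<lambda>x. f x a) (qv q))"
      by (rule sum.cong) (auto simp: W1eq[OF _ q])
    then show ?thesis using sum_two_minus[of "\<lambda>a. optv (X_law \<mu> a) (\<lambda>x. f x a) (qv q)"] by (simp add: Phi_def)
  qed
  have W1set: "is_min {\<Sum>a\<in>{1..m}. W1 (r a) q | q. q \<in> Qk} (2 * V)"
    unfolding is_min_def
  proof (intro conjI ballI)
    have "Qm qs \<in> Qk" "qv (Qm qs) = qs" using Qm_Qk[OF qs(1)] qv_Qm[OF qs(1)] by auto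
    then show "2 * V \<in> {\<Sum>a\<in>{1..m}. W1 (r a) q | q. q \<in> Qk}"
      using W1sum[of "Qm qs"] by (auto simp: V_def intro!: exI[of _ "Qm qs"])
    fix c assume "c \<in> {\<Sum>a\<in>{1..m}. W1 (r a) q | q. q \<in> Qk}"
    then obtain q where q: "q \<in> Qk" "c = (\<Sum>a\<in>{1..m}. W1 (r a) q)" by blast
    then show "2 * V \<le> c" using W1sum[OF q(1)] qs(2)[OF Qk_eq_Qm(1)[OF q(1)]] by (simp add: V_def)
  qed
  have THEset: "{\<Sum>a\<in>{1..m}. (THE c. is_min (transport_cost ` couplings (r a) q) c) | q. q \<in> Qk}
      = {\<Sum>a\<in>{1..m}. W1 (r a) q | q. q \<in> Qk}"
  proof -
    have eq: "(\<Sum>a\<in>{1..m}. (THE c. is_min (transport_cost ` couplings (r a) q) c)) = (\<Sum>a\<in>{1..m}. W1 (r a) q)"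
      if "q \<in> Qk" for q using THEeq[OF _ that] by (intro sum.cong) auto
    show ?thesis
    proof (rule Collect_cong)
      fix x
      show "(\<exists>q. x = (\<Sum>a\<in>{1..m}. (THE c. is_min (transport_cost ` couplings (r a) q) c)) \<and> q \<in> Qk) =
            (\<exists>q. x = (\<Sum>a\<in>{1..m}. W1 (r a) q) \<and> q \<in> Qk)"
        using eq by metis
    qed
  qed
  have Errset: "is_min {\<Sum>a\<in>{1..m}. Err \<mu> h a | h. randomized_classifier m h \<and> demographic_parity m \<mu> h} V"
    unfolding is_min_def
  proof (intro conjI ballI)
    have "\<forall>a\<in>{1..m}. \<exists>H. kern (X_law \<mu> a) H \<and> marg (X_law \<mu> a) H = qs \<and>
             gain (X_law \<mu> a) (\<lambda>x. f x a) H = optv (X_law \<mu> a) (\<lambda>x. f x a) qs"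
    proof
      fix a assume a: "a \<in> {1..m}"
      interpret S: semi "X_law \<mu> a" "\<lambda>x. f x a" by (rule semi_PX[OF a])
      show "\<exists>H. kern (X_law \<mu> a) H \<and> marg (X_law \<mu> a) H = qs \<and>
             gain (X_law \<mu> a) (\<lambda>x. f x a) H = optv (X_law \<mu> a) (\<lambda>x. f x a) qs"
        using S.optv_strong[OF qs(1)] by blast
    qed
    then obtain HH where HH: "\<And>a. a \<in> {1..m} \<Longrightarrow> kern (X_law \<mu> a) (HH a) \<and> marg (X_law \<mu> a) (HH a) = qs \<and>
             gain (X_law \<mu> a) (\<lambda>x. f x a) (HH a) = optv (X_law \<mu> a) (\<lambda>x. f x a) qs"
      by metis
    define h where "h x a y = (\<Sum>i\<in>UNIV. if axis i (1::real) = y then HH a x i else 0)" for x a y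
    have hax: "h x a (axis j 1) = HH a x j" for x a j
    proof -
      have "h x a (axis j 1) = (\<Sum>i\<in>UNIV. if i = j then HH a x i else 0)"
        unfolding h_def by (rule sum.cong) (auto simp: axis_eq_axis)
      then show ?thesis by simp
    qed
    have Hk: "Hk h a = HH a" for a by (simp add: Hk_def hax fun_eq_iff)
    have rc: "randomized_classifier m h"
      unfolding randomized_classifier_def
    proof (intro conjI ballI allI)
      fix a and y :: "real^'k" assume a: "a \<in> {1..m}" and y: "y \<in> labels"
      have K: "kern (X_law \<mu> a) (HH a)" using HH[OF a] by blast
      have "(\<lambda>x. HH a x i) \<in> borel_measurable borel" for i using K by (simp add: kern_def PX_meas)
      then show "(\<lambda>x. h x a y) \<in> borel_measurable borel" unfolding h_def by measurable
    next
      fix x a and y :: "real^'k" assume a: "a \<in> {1..m}" and y: "y \<in> labels"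
      have K: "kern (X_law \<mu> a) (HH a)" using HH[OF a] by blast
      then show "0 \<le> h x a y" unfolding h_def by (intro sum_nonneg) (auto simp: kern_def)
    next
      fix x a assume a: "a \<in> {1..m}"
      have K: "kern (X_law \<mu> a) (HH a)" using HH[OF a] by blast
      show "(\<Sum>y\<in>(labels::(real^'k) set). h x a y) = 1" using K by (simp add: sum_labels hax kern_def)
    qed
    have Errh: "Err \<mu> h a = 1 - optv (X_law \<mu> a) (\<lambda>x. f x a) qs" if a: "a \<in> {1..m}" for a
      using Err_H[OF rc a] HH[OF a] by (simp add: Hk)
    have pph: "pred_prob \<mu> h a (axis i 1) = qs $ i" if a: "a \<in> {1..m}" for a i
      using marg_H[OF rc a, of i] HH[OF a] by (simp add: Hk)
    have dp: "demographic_parity m \<mu> h"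
      unfolding demographic_parity_def
    proof (intro ballI)
      fix y :: "real^'k" and a a' assume y: "y \<in> labels" and a: "a \<in> {1..m}" and a': "a' \<in> {1..m}"
      obtain j where "y = axis j 1" using y labels_iff by blast
      then show "pred_prob \<mu> h a y = pred_prob \<mu> h a' y" using pph[OF a] pph[OF a'] by simp
    qed
    have "(\<Sum>a\<in>{1..m}. Err \<mu> h a) = (\<Sum>a\<in>{1..m}. 1 - optv (X_law \<mu> a) (\<lambda>x. f x a) qs)"
      by (rule sum.cong) (auto simp: Errh)
    also have "\<dots> = V" using sum_one_minus[of "\<lambda>a. optv (X_law \<mu> a) (\<lambda>x. f x a) qs" m] by (simp add: V_def Phi_def)
    finally show "V \<in> {\<Sum>a\<in>{1..m}. Err \<mu> h a | h. randomized_classifier m h \<and> demographic_parity m \<mu> h}"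
      using rc dp by blast
  next
    fix c assume "c \<in> {\<Sum>a\<in>{1..m}. Err \<mu> h a | h. randomized_classifier m h \<and> demographic_parity m \<mu> h}"
    then obtain h where c: "c = (\<Sum>a\<in>{1..m}. Err \<mu> h a)" and rc: "randomized_classifier m h"
      and dp: "demographic_parity m \<mu> h" by blast
    have one: "1 \<in> {1..m}" using m1 by simp
    define p where "p = marg (X_law \<mu> 1) (Hk h 1)"
    have margp: "marg (X_law \<mu> a) (Hk h a) = p" if a: "a \<in> {1..m}" for a
    proof -
      have "marg (X_law \<mu> a) (Hk h a) $ i = p $ i" for i
      proof -
        have "pred_prob \<mu> h a (axis i 1) = pred_prob \<mu> h 1 (axis i 1)"
          using dp a one axis_in_labels unfolding demographic_parity_def by blast
        then show ?thesis using marg_H[OF rc a, of i] marg_H[OF rc one, of i] by (simp add: p_def)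
      qed
      then show ?thesis by (simp add: vec_eq_iff)
    qed
    have p: "p \<in> sx"
    proof -
      interpret S: semi "X_law \<mu> 1" "\<lambda>x. f x 1" by (rule semi_PX[OF one])
      show ?thesis unfolding p_def by (rule S.marg_sx[OF kern_H[OF rc one]])
    qed
    have "(\<Sum>a\<in>{1..m}. 1 - optv (X_law \<mu> a) (\<lambda>x. f x a) p) \<le> (\<Sum>a\<in>{1..m}. Err \<mu> h a)"
    proof (rule sum_mono)
      fix a assume a: "a \<in> {1..m}"
      interpret S: semi "X_law \<mu> a" "\<lambda>x. f x a" by (rule semi_PX[OF a])
      have "gain (X_law \<mu> a) (\<lambda>x. f x a) (Hk h a) \<le> optv (X_law \<mu> a) (\<lambda>x. f x a) p"
        using S.gain_le_optv[OF kern_H[OF rc a]] margp[OF a] by simp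
      then show "1 - optv (X_law \<mu> a) (\<lambda>x. f x a) p \<le> Err \<mu> h a" using Err_H[OF rc a] by simp
    qed
    moreover have "(\<Sum>a\<in>{1..m}. 1 - optv (X_law \<mu> a) (\<lambda>x. f x a) p) = real m - Phi p"
      using sum_one_minus[of "\<lambda>a. optv (X_law \<mu> a) (\<lambda>x. f x a) p" m] by (simp add: Phi_def)
    moreover have "Phi p \<le> Phi qs" by (rule qs(2)[OF p])
    ultimately show "V \<le> c" using c by (simp add: V_def)
  qed
  show ?thesis using Errset W1set W1min THEset by auto
qed

end

theorem theorem3p1:
  fixes m :: nat
    and \<mu> :: "('x::polish_space \<times> (real^'k) \<times> nat) measure"
    and f :: "'x \<Rightarrow> nat \<Rightarrow> (real^'k)"
  assumes "CARD('k) \<ge> 2"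
    and "m \<ge> 1"
    and "classification_problem m \<mu>"
    and "bayes_regressor m \<mu> f"
  defines "r \<equiv> (\<lambda>a. distr (X_law \<mu> a) borel (\<lambda>x. f x a))"
  shows "\<exists>V.
     is_min {\<Sum>a\<in>{1..m}. Err \<mu> h a | h. randomized_classifier m h \<and> demographic_parity m \<mu> h} V \<and>
     is_min {\<Sum>a\<in>{1..m}. W1 (r a) q | q. q \<in> Qk} (2 * V) \<and>
     (\<forall>q\<in>Qk. \<forall>a\<in>{1..m}. is_min (transport_cost ` couplings (r a) q) (W1 (r a) q)) \<and>
     is_min {\<Sum>a\<in>{1..m}. (THE c. is_min (transport_cost ` couplings (r a) q) c) | q. q \<in> Qk} (2 * V)"
  proof -
  interpret cp m \<mu> f using assms(3,4) by (rule cp.intro)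
  show ?thesis unfolding r_def by (rule main_cp[OF assms(2)])
qed

end
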